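(* Let $(w_n)_{n\ge0}$ be nonnegative reals with $W(z)=\sum_{n\ge0}w_nz^n$, and assume there are $\rho_w>0$ and a slowly varying $L_w$ with $w_n\sim L_w(n)n^{-1}\rho_w^{-n}$ and $W(\rho_w)\in(0,\infty)$. Let $X_1,X_2,\dots$ be i.i.d. with probability generating function $W(\rho_w z)/W(\rho_w)$ and $S_k=X_1+\dots+X_k$. For each $n\ge1$ let $k=k(n)$ be a positive integer such that $k\,L_w(n)\to0$. Then, as $n\to\infty$, $$d_{\mathrm{TV}}\Big(\mathcal{L}\big(\tau(X_1,\dots,X_k)\,\big|\,S_k=n\big),\ \mathcal{L}\big((X_1,\dots,X_{k-1})\,\big|\,X_i\le n\ \forall i\le k-1\big)\Big)\to0.$$ Consequently, conditionally on $S_k=n$, $\max(X_1,\dots,X_k)/n\to1$ in probability.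
   Context: The "delete first maximum" operator $\tau$ maps $(x_1,\dots,x_k)\in\mathbb{N}_0^k$ to $(x_1,\dots,x_{J-1},x_{J+1},\dots,x_k)\in\mathbb{N}_0^{k-1}$ where $J=\min\{j:x_j=\max_i x_i\}$. $d_{\mathrm{TV}}$ is total variation distance between laws on $\mathbb{N}_0^{k-1}$. *)

theory Defs
  imports "HOL-Analysis.Analysis" "HOL-Library.Landau_Symbols"
begin

definition slowly_varying :: "(real \<Rightarrow> real) \<Rightarrow> bool" where
  "slowly_varying L \<longleftrightarrow> L \<in> borel_measurable borel \<and>
     eventually (\<lambda>x. L x > 0) at_top \<and>
     (\<forall>c>0. ((\<lambda>x. L (c * x) / L x) \<longlongrightarrow> 1) at_top)"

text \<open>Delete-first-maximum operator on tuples, represented as lists.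
  remove1 removes the first occurrence, i.e. the entry at index J.\<close>
definition tau :: "nat list \<Rightarrow> nat list" where
  "tau xs = remove1 (Max (set xs)) xs"

text \<open>Probability mass function of X_i: P(X = j) = w_j rho^j / W(rho),
  i.e. the law with pgf W(rho z)/W(rho).\<close>
definition step_prob :: "(nat \<Rightarrow> real) \<Rightarrow> real \<Rightarrow> nat \<Rightarrow> real" where
  "step_prob w \<rho> j = w j * \<rho> ^ j / (\<Sum>i. w i * \<rho> ^ i)"

definition list_prob :: "(nat \<Rightarrow> real) \<Rightarrow> nat list \<Rightarrow> real" where
  "list_prob p xs = prod_list (map p xs)"

definition cond_tau_law :: "(nat \<Rightarrow> real) \<Rightarrow> nat \<Rightarrow> nat \<Rightarrow> nat list \<Rightarrow> real" where
  "cond_tau_law p k n ys =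
     (\<Sum>xs | length xs = k \<and> sum_list xs = n \<and> tau xs = ys. list_prob p xs) /
     (\<Sum>xs | length xs = k \<and> sum_list xs = n. list_prob p xs)"

definition trunc_law :: "(nat \<Rightarrow> real) \<Rightarrow> nat \<Rightarrow> nat \<Rightarrow> nat list \<Rightarrow> real" where
  "trunc_law p k n ys =
     (if length ys = k - 1 \<and> (\<forall>y\<in>set ys. y \<le> n)
      then list_prob p ys /
           (\<Sum>zs | length zs = k - 1 \<and> (\<forall>z\<in>set zs. z \<le> n). list_prob p zs)
      else 0)"

definition tv_dist :: "(nat list \<Rightarrow> real) \<Rightarrow> (nat list \<Rightarrow> real) \<Rightarrow> real" where
  "tv_dist f g = (1/2) * infsum (\<lambda>ys. \<bar>f ys - g ys\<bar>) UNIV"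

definition cond_max_dev :: "(nat \<Rightarrow> real) \<Rightarrow> nat \<Rightarrow> nat \<Rightarrow> real \<Rightarrow> real" where
  "cond_max_dev p k n \<epsilon> =
     (\<Sum>xs | length xs = k \<and> sum_list xs = n \<and>
              \<bar>real (Max (set xs)) / real n - 1\<bar> > \<epsilon>. list_prob p xs) /
     (\<Sum>xs | length xs = k \<and> sum_list xs = n. list_prob p xs)"

end

theory Submission
  imports Defs "HOL-Analysis.Analysis" "HOL-Library.Landau_Symbols"
begin

lemma sum_lists_prod:
  fixes f :: "nat \<Rightarrow> real"
  assumes "finite A"
  shows "(\<Sum>xs\<in>{xs. set xs \<subseteq> A \<and> length xs = K}. prod_list (map f xs)) = (\<Sum>a\<in>A. f a)^K"
proof (induction K)
  case 0
  have "{xs. set xs \<subseteq> A \<and> length xs = 0} = {[]}" by auto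
  then show ?case by simp
next
  case (Suc K)
  let ?L = "{xs. set xs \<subseteq> A \<and> length xs = K}"
  have inj: "inj_on (\<lambda>(xs, n). n#xs) (?L \<times> A)" by (auto simp: inj_on_def)
  have "(\<Sum>xs\<in>{xs. set xs \<subseteq> A \<and> length xs = Suc K}. prod_list (map f xs))
      = (\<Sum>p\<in>?L \<times> A. prod_list (map f ((\<lambda>(xs, n). n#xs) p)))"
    unfolding lists_length_Suc_eq by (subst sum.reindex[OF inj]) (simp add: comp_def)
  also have "\<dots> = (\<Sum>xs\<in>?L. \<Sum>a\<in>A. f a * prod_list (map f xs))"
    by (simp add: sum.cartesian_product case_prod_unfold)
  also have "\<dots> = (\<Sum>xs\<in>?L. (\<Sum>a\<in>A. f a) * prod_list (map f xs))"
    by (simp add: sum_distrib_right)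
  also have "\<dots> = (\<Sum>a\<in>A. f a) * (\<Sum>a\<in>A. f a)^K"
    using Suc by (simp add: sum_distrib_left[symmetric])
  finally show ?case by simp
qed

lemma prod_list_exp:
  fixes f :: "nat \<Rightarrow> real"
  shows "prod_list (map f xs) * exp (l * real (sum_list xs)) = prod_list (map (\<lambda>j. f j * exp (l * real j)) xs)"
  by (induction xs) (auto simp: exp_add distrib_left algebra_simps)

lemma chernoff_lists:
  fixes f :: "nat \<Rightarrow> real" and l s :: real
  assumes f: "\<And>j. f j \<ge> 0" and l: "l \<ge> 0"
  shows "(\<Sum>xs\<in>{xs. set xs \<subseteq> {..y} \<and> length xs = K \<and> real (sum_list xs) \<ge> s}. prod_list (map f xs))
     \<le> exp (- l * s) * (\<Sum>j\<le>y. f j * exp (l * real j))^K"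
proof -
  let ?L = "{xs. set xs \<subseteq> {..y} \<and> length xs = K}"
  have fin: "finite ?L" by (rule finite_lists_length_eq) simp
  have pos: "prod_list (map f xs) \<ge> 0" for xs using f by (induction xs) auto
  have "(\<Sum>xs\<in>{xs. set xs \<subseteq> {..y} \<and> length xs = K \<and> real (sum_list xs) \<ge> s}. prod_list (map f xs))
     \<le> (\<Sum>xs\<in>{xs. set xs \<subseteq> {..y} \<and> length xs = K \<and> real (sum_list xs) \<ge> s}. prod_list (map f xs) * exp (l * (real (sum_list xs) - s)))"
  proof (rule sum_mono)
    fix xs assume "xs \<in> {xs. set xs \<subseteq> {..y} \<and> length xs = K \<and> real (sum_list xs) \<ge> s}"
    then have "exp (l * (real (sum_list xs) - s)) \<ge> 1" using l by auto
    then show "prod_list (map f xs) \<le> prod_list (map f xs) * exp (l * (real (sum_list xs) - s))"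
      using pos[of xs] by (metis mult_le_cancel_left1 not_le order.strict_trans2 order_less_irrefl mult_cancel_left1 mult_left_mono mult.right_neutral)
  qed
  also have "\<dots> \<le> (\<Sum>xs\<in>?L. prod_list (map f xs) * exp (l * (real (sum_list xs) - s)))"
    by (rule sum_mono2[OF fin]) (auto intro!: mult_nonneg_nonneg pos)
  also have "\<dots> = exp (- l * s) * (\<Sum>xs\<in>?L. prod_list (map f xs) * exp (l * real (sum_list xs)))"
    by (simp add: sum_distrib_left right_diff_distrib exp_diff exp_minus field_simps)
  also have "\<dots> = exp (- l * s) * (\<Sum>j\<le>y. f j * exp (l * real j))^K"
    by (simp add: prod_list_exp sum_lists_prod)
  finally show ?thesis .
qed

definition ins :: "nat \<Rightarrow> nat \<Rightarrow> nat list \<Rightarrow> nat list" where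
  "ins J m ys = take J ys @ m # drop J ys"

definition Fnum :: "(nat \<Rightarrow> real) \<Rightarrow> nat \<Rightarrow> nat \<Rightarrow> nat list \<Rightarrow> real" where
  "Fnum p k n ys = (\<Sum>xs | length xs = k \<and> sum_list xs = n \<and> tau xs = ys. list_prob p xs)"

lemma list_prob_ins: "list_prob p (ins J m ys) = p m * list_prob p ys"
proof -
  have "list_prob p ys = list_prob p (take J ys) * list_prob p (drop J ys)"
    unfolding list_prob_def by (metis append_take_drop_id map_append prod_list.append)
  then show ?thesis unfolding ins_def list_prob_def by simp
qed

lemma list_prob_nonneg: "(\<And>j. p j \<ge> 0) \<Longrightarrow> list_prob p xs \<ge> 0"
  unfolding list_prob_def by (induction xs) auto

lemma tau_preimage:
  assumes "length xs = k" "k \<ge> 1" "sum_list xs = n" "tau xs = ys"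
  shows "length ys = k - 1 \<and> sum_list ys \<le> n \<and> (\<forall>y\<in>set ys. y \<le> n - sum_list ys)
         \<and> (\<exists>J<k. xs = ins J (n - sum_list ys) ys) \<and> Max (set xs) = n - sum_list ys"
proof -
  define M where "M = Max (set xs)"
  have ne: "xs \<noteq> []" using assms by auto
  have M: "M \<in> set xs" using ne unfolding M_def by simp
  obtain a b where ab: "xs = a @ M # b" "M \<notin> set a" using split_list_first[OF M] by blast
  have ys: "ys = a @ b" using assms(4) ab unfolding tau_def M_def[symmetric]
    by (metis remove1.simps(2) remove1_append)
  have le: "\<forall>y\<in>set ys. y \<le> M" unfolding M_def using ys ab
    by (metis List.finite_set Max_ge Un_iff set_append set_subset_Cons subsetD)
  have sum: "sum_list xs = sum_list ys + M" using ab ys by simp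
  have Mv: "M = n - sum_list ys" using sum assms(3) by simp
  have "xs = ins (length a) (n - sum_list ys) ys" using ab ys Mv unfolding ins_def by simp
  moreover have "length a < k" using ab assms(1) by auto
  moreover have "length ys = k - 1" using ab ys assms(1) by simp
  ultimately show ?thesis using ys sum assms(3) le Mv unfolding M_def by auto
qed

lemma finite_len_sum: "finite {xs::nat list. length xs = k \<and> sum_list xs = n \<and> P xs}"
proof (rule finite_subset)
  show "{xs. length xs = k \<and> sum_list xs = n \<and> P xs} \<subseteq> {xs. set xs \<subseteq> {..n} \<and> length xs = k}"
    by (auto simp: member_le_sum_list)
qed (rule finite_lists_length_eq, simp)

lemma Fnum_upper:
  assumes p: "\<And>j. p j \<ge> 0" and k: "k \<ge> 1"
  shows "Fnum p k n ys \<le> (if length ys = k - 1 \<and> sum_list ys \<le> n \<and> (\<forall>y\<in>set ys. y \<le> n - sum_list ys)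
            then real k * p (n - sum_list ys) * list_prob p ys else 0)"
proof (cases "length ys = k - 1 \<and> sum_list ys \<le> n \<and> (\<forall>y\<in>set ys. y \<le> n - sum_list ys)")
  case True
  let ?m = "n - sum_list ys"
  have sub: "{xs. length xs = k \<and> sum_list xs = n \<and> tau xs = ys} \<subseteq> (\<lambda>J. ins J ?m ys) ` {..<k}"
    using tau_preimage[OF _ k] by blast
  have "Fnum p k n ys \<le> sum (list_prob p) ((\<lambda>J. ins J ?m ys) ` {..<k})"
    unfolding Fnum_def by (rule sum_mono2) (use sub list_prob_nonneg[OF p] in auto)
  also have "\<dots> \<le> sum (list_prob p \<circ> (\<lambda>J. ins J ?m ys)) {..<k}"
    by (rule sum_image_le) (auto intro: list_prob_nonneg[OF p])
  also have "\<dots> = real k * p ?m * list_prob p ys" by (simp add: list_prob_ins)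
  finally show ?thesis using True by simp
next
  case False
  have e: "{xs. length xs = k \<and> sum_list xs = n \<and> tau xs = ys} = {}"
    using tau_preimage[OF _ k] False by blast
  show ?thesis using False unfolding Fnum_def e by auto
qed

lemma Fnum_lower:
  assumes p: "\<And>j. p j \<ge> 0" and k: "k \<ge> 1" and len: "length ys = k - 1" and sn: "sum_list ys \<le> n"
    and lt: "\<forall>y\<in>set ys. y < n - sum_list ys"
  shows "Fnum p k n ys \<ge> real k * p (n - sum_list ys) * list_prob p ys"
proof -
  let ?m = "n - sum_list ys"
  have notin: "?m \<notin> set ys" using lt by auto
  have inj: "inj_on (\<lambda>J. ins J ?m ys) {..<k}"
  proof (rule inj_onI)
    fix J J' assume J: "J \<in> {..<k}" "J' \<in> {..<k}" and eq: "ins J ?m ys = ins J' ?m ys"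
    have tw: "takeWhile (\<lambda>x. x \<noteq> ?m) (ins I ?m ys) = take I ys" for I
      using notin unfolding ins_def by (subst takeWhile_append2) (auto dest: in_set_takeD)
    have "take J ys = take J' ys" using tw[of J] tw[of J'] eq by simp
    then have "length (take J ys) = length (take J' ys)" by simp
    then show "J = J'" using J len k by auto
  qed
  have sub: "(\<lambda>J. ins J ?m ys) ` {..<k} \<subseteq> {xs. length xs = k \<and> sum_list xs = n \<and> tau xs = ys}"
  proof safe
    fix J assume J: "J < k"
    let ?x = "ins J ?m ys"
    show "length ?x = k" using J len k unfolding ins_def by auto
    have "sum_list ys = sum_list (take J ys) + sum_list (drop J ys)"
      by (metis append_take_drop_id sum_list_append)
    then show "sum_list ?x = n" using sn unfolding ins_def by simp
    have st: "set ?x = insert ?m (set ys)" unfolding ins_def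
      by (metis Un_insert_right append_take_drop_id set_append list.set(2))
    have "Max (set ?x) = ?m" unfolding st by (rule Max_eqI) (use lt in auto)
    moreover have "?m \<notin> set (take J ys)" using notin by (auto dest: in_set_takeD)
    ultimately show "tau ?x = ys" unfolding tau_def ins_def
      by (simp add: remove1_append)
  qed
  have "real k * p ?m * list_prob p ys = sum (list_prob p \<circ> (\<lambda>J. ins J ?m ys)) {..<k}"
    by (simp add: list_prob_ins)
  also have "\<dots> = sum (list_prob p) ((\<lambda>J. ins J ?m ys) ` {..<k})"
    by (rule sum.reindex[OF inj, symmetric])
  also have "\<dots> \<le> Fnum p k n ys" unfolding Fnum_def
    by (rule sum_mono2[OF finite_len_sum sub]) (auto intro: list_prob_nonneg[OF p])
  finally show ?thesis .
qed

lemma sv_lim_seq: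
  assumes sv: "slowly_varying L" and c: "c > 0" and x: "filterlim x at_top sequentially"
  shows "((\<lambda>n. L (c * x n) / L (x n)) \<longlongrightarrow> 1) sequentially"
proof -
  have "((\<lambda>t. L (c * t) / L t) \<longlongrightarrow> 1) at_top" using sv c unfolding slowly_varying_def by auto
  from filterlim_compose[OF this x] show ?thesis by (simp add: comp_def)
qed

lemma ind_int: "integrable lborel (indicator {a..b::real} :: real \<Rightarrow> real)"
  by (simp add: integrable_indicator_iff emeasure_lborel_Icc_eq)

lemma measure_indicator_bound:
  fixes L :: "real \<Rightarrow> real" and x \<eta> a b :: real
  assumes [measurable]: "L \<in> borel_measurable borel"
  shows "(\<lambda>c. indicator {a..b} c * (if \<eta> \<le> \<bar>L (c * x) / L x - 1\<bar> then 1 else 0) :: real) \<in> borel_measurable lborel"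
  by measurable

lemma dct_zero:
  fixes L :: "real \<Rightarrow> real" and x :: "nat \<Rightarrow> real"
  assumes sv: "slowly_varying L" and x: "filterlim x at_top sequentially" and a: "a > 0" and \<eta>: "\<eta> > 0"
  shows "((\<lambda>n. integral\<^sup>L lborel (\<lambda>c. indicator {a..b} c * (if \<eta> \<le> \<bar>L (c * x n) / L (x n) - 1\<bar> then 1 else 0) :: real)) \<longlongrightarrow> 0) sequentially"
proof -
  have meas: "L \<in> borel_measurable borel" using sv unfolding slowly_varying_def by auto
  have "((\<lambda>n. integral\<^sup>L lborel (\<lambda>c. indicator {a..b} c * (if \<eta> \<le> \<bar>L (c * x n) / L (x n) - 1\<bar> then 1 else 0) :: real)) \<longlongrightarrow> integral\<^sup>L lborel (\<lambda>c::real. 0::real)) sequentially"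
  proof (rule integral_dominated_convergence[where w="indicator {a..b}" and f="\<lambda>c. 0" and
      s="\<lambda>n c. indicator {a..b} c * (if \<eta> \<le> \<bar>L (c * x n) / L (x n) - 1\<bar> then 1 else 0)"])
    show "(\<lambda>c::real. 0::real) \<in> borel_measurable lborel" by simp
    show "(\<lambda>c. indicator {a..b} c * (if \<eta> \<le> \<bar>L (c * x n) / L (x n) - 1\<bar> then 1 else 0) :: real) \<in> borel_measurable lborel" for n
      by (rule measure_indicator_bound[OF meas])
    show "integrable lborel (indicator {a..b} :: real \<Rightarrow> real)" by (rule ind_int)
    show "AE c in lborel. norm (indicator {a..b} c * (if \<eta> \<le> \<bar>L (c * x n) / L (x n) - 1\<bar> then 1 else 0) :: real) \<le> indicator {a..b} c" for n
      by (auto simp: indicator_def)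
    show "AE c in lborel. (\<lambda>n. indicator {a..b} c * (if \<eta> \<le> \<bar>L (c * x n) / L (x n) - 1\<bar> then 1 else 0) :: real) \<longlonglongrightarrow> 0"
    proof (rule AE_I2)
      fix c :: real
      show "(\<lambda>n. indicator {a..b} c * (if \<eta> \<le> \<bar>L (c * x n) / L (x n) - 1\<bar> then 1 else 0) :: real) \<longlonglongrightarrow> 0"
      proof (cases "c \<in> {a..b}")
        case False then show ?thesis by simp
      next
        case True
        then have "c > 0" using a by auto
        from sv_lim_seq[OF sv this x] have "\<forall>\<^sub>F n in sequentially. dist (L (c * x n) / L (x n)) 1 < \<eta>"
          using \<eta> by (simp add: tendsto_iff)
        then have "\<forall>\<^sub>F n in sequentially. indicator {a..b} c * (if \<eta> \<le> \<bar>L (c * x n) / L (x n) - 1\<bar> then 1 else 0) = (0::real)"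
          by eventually_elim (auto simp: dist_real_def)
        then show ?thesis by (rule tendsto_eventually)
      qed
    qed
  qed
  then show ?thesis by simp
qed

lemma ratio_aux:
  fixes a b e \<epsilon> :: real
  assumes a: "a > 0" and b: "b > 0" and e: "e > 0" and \<epsilon>: "\<epsilon> > 0"
    and h1: "\<bar>e / a - 1\<bar> < \<epsilon> / (3 + \<epsilon>)" and h2: "\<bar>e / b - 1\<bar> < \<epsilon> / (3 + \<epsilon>)"
  shows "\<bar>b / a - 1\<bar> \<le> \<epsilon>"
proof -
  define \<eta> where "\<eta> = \<epsilon> / (3 + \<epsilon>)"
  have \<eta>1: "0 < \<eta>" "\<eta> < 1" using \<epsilon> unfolding \<eta>_def by auto
  have "1 - \<eta> = 3 / (3 + \<epsilon>)" using \<epsilon> unfolding \<eta>_def by (simp add: field_simps)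
  then have "2 * \<eta> / (1 - \<eta>) = 2 * \<epsilon> / 3" using \<epsilon> unfolding \<eta>_def by (simp add: field_simps)
  then have \<eta>: "0 < \<eta>" "\<eta> < 1" "2 * \<eta> / (1 - \<eta>) \<le> \<epsilon>" using \<eta>1 \<epsilon> by auto
  define r1 where "r1 = e / a"
  define r2 where "r2 = e / b"
  have r2: "r2 > 1 - \<eta>" using h2 unfolding r2_def \<eta>_def by auto
  have ba: "b / a - 1 = (r1 - r2) / r2" using a b e unfolding r1_def r2_def by (auto simp: field_simps)
  have "\<bar>r1 - r2\<bar> < 2 * \<eta>" using h1 h2 unfolding r1_def r2_def \<eta>_def by auto
  then have "\<bar>(r1 - r2) / r2\<bar> \<le> 2 * \<eta> / (1 - \<eta>)"
    using r2 \<eta> by (subst abs_divide) (intro frac_le, auto)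
  then show ?thesis using ba \<eta> by auto
qed

lemma UCT:
  fixes L :: "real \<Rightarrow> real"
  assumes sv: "slowly_varying L" and \<epsilon>: "\<epsilon> > 0"
  shows "\<exists>X0. \<forall>x\<ge>X0. \<forall>c\<in>{1/2..1}. \<bar>L (c * x) / L x - 1\<bar> \<le> \<epsilon>"
proof (rule ccontr)
  assume "\<not> ?thesis"
  then have "\<forall>X0. \<exists>x\<ge>X0. \<exists>c\<in>{1/2..1}. \<bar>L (c * x) / L x - 1\<bar> > \<epsilon>"
    by (simp add: not_le)
  then have "\<forall>n::nat. \<exists>x c. x \<ge> real n \<and> c \<in> {1/2..1} \<and> \<bar>L (c * x) / L x - 1\<bar> > \<epsilon>"
    by blast
  then obtain x c where xc0: "\<forall>n. x n \<ge> real n \<and> c n \<in> {1/2..1} \<and> \<bar>L (c n * x n) / L (x n) - 1\<bar> > \<epsilon>"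
    by (metis choice)
  then have xc: "\<And>n. x n \<ge> real n" "\<And>n. c n \<in> {1/2..1}" "\<And>n. \<bar>L (c n * x n) / L (x n) - 1\<bar> > \<epsilon>"
    by auto
  have meas[measurable]: "L \<in> borel_measurable borel" using sv unfolding slowly_varying_def by auto
  have xlim: "filterlim x at_top sequentially"
    by (rule filterlim_at_top_mono[OF filterlim_real_sequentially]) (use xc(1) in auto)
  define y where "y n = c n * x n" for n
  have yge: "y n \<ge> real n / 2" for n
  proof -
    have "c n * x n \<ge> (1/2) * real n" using xc(1)[of n] xc(2)[of n] by (intro mult_mono) auto
    then show ?thesis unfolding y_def by simp
  qed
  have ylim: "filterlim y at_top sequentially"
  proof (rule filterlim_at_top_mono[of "\<lambda>n. real n / 2"])
    show "filterlim (\<lambda>n. real n / 2) at_top sequentially"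
      using filterlim_at_top_mult_tendsto_pos[OF tendsto_const[of "1/2::real"] _ filterlim_real_sequentially]
      by simp
  qed (use yge in auto)
  obtain X1 where X1: "\<And>t. t \<ge> X1 \<Longrightarrow> L t > 0"
    using sv unfolding slowly_varying_def eventually_at_top_linorder by auto
  define \<eta> where "\<eta> = \<epsilon> / (3 + \<epsilon>)"
  have \<eta>: "\<eta> > 0" using \<epsilon> unfolding \<eta>_def by auto
  have U: "((\<lambda>n. integral\<^sup>L lborel (\<lambda>c. indicator {1/4..1} c * (if \<eta> \<le> \<bar>L (c * x n) / L (x n) - 1\<bar> then 1 else 0) :: real)) \<longlongrightarrow> 0) sequentially"
    by (rule dct_zero[OF sv xlim _ \<eta>]) auto
  have V: "((\<lambda>n. integral\<^sup>L lborel (\<lambda>c. indicator {1/4..2} c * (if \<eta> \<le> \<bar>L (c * y n) / L (y n) - 1\<bar> then 1 else 0) :: real)) \<longlongrightarrow> 0) sequentially"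
    by (rule dct_zero[OF sv ylim _ \<eta>]) auto
  have "\<forall>\<^sub>F n in sequentially. integral\<^sup>L lborel (\<lambda>c. indicator {1/4..1} c * (if \<eta> \<le> \<bar>L (c * x n) / L (x n) - 1\<bar> then 1 else 0) :: real) < 1/4"
    using U by (rule order_tendstoD) simp
  moreover have "\<forall>\<^sub>F n in sequentially. integral\<^sup>L lborel (\<lambda>c. indicator {1/4..2} c * (if \<eta> \<le> \<bar>L (c * y n) / L (y n) - 1\<bar> then 1 else 0) :: real) < 1/4"
    using V by (rule order_tendstoD) simp
  moreover have "\<forall>\<^sub>F n in sequentially. real n \<ge> 8 * max X1 0"
    by (rule eventually_sequentiallyI[of "nat \<lceil>8 * max X1 0\<rceil>"]) linarith
  ultimately have "\<forall>\<^sub>F n in sequentially. integral\<^sup>L lborel (\<lambda>c. indicator {1/4..1} c * (if \<eta> \<le> \<bar>L (c * x n) / L (x n) - 1\<bar> then 1 else 0) :: real) < 1/4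
     \<and> integral\<^sup>L lborel (\<lambda>c. indicator {1/4..2} c * (if \<eta> \<le> \<bar>L (c * y n) / L (y n) - 1\<bar> then 1 else 0) :: real) < 1/4
     \<and> real n \<ge> 8 * max X1 0" by (intro eventually_conj)
  then obtain N where N1: "integral\<^sup>L lborel (\<lambda>c. indicator {1/4..1} c * (if \<eta> \<le> \<bar>L (c * x N) / L (x N) - 1\<bar> then 1 else 0) :: real) < 1/4"
    and N2: "integral\<^sup>L lborel (\<lambda>c. indicator {1/4..2} c * (if \<eta> \<le> \<bar>L (c * y N) / L (y N) - 1\<bar> then 1 else 0) :: real) < 1/4"
    and N3: "real N \<ge> 8 * max X1 0"
    unfolding eventually_sequentially by blast
  define a where "a = x N"
  define cN where "cN = c N"
  have cN: "cN \<ge> 1/2" "cN \<le> 1" using xc(2)[of N] unfolding cN_def by auto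
  have aX: "a \<ge> 8 * max X1 0" using xc(1)[of N] N3 unfolding a_def by linarith
  have yN: "y N = cN * a" unfolding y_def cN_def a_def by simp
  define u where "u = (\<lambda>c. indicator {1/4..1} c * (if \<eta> \<le> \<bar>L (c * a) / L a - 1\<bar> then 1 else 0) :: real)"
  define v where "v = (\<lambda>c. indicator {1/4..2} c * (if \<eta> \<le> \<bar>L (c * (cN * a)) / L (cN * a) - 1\<bar> then 1 else 0) :: real)"
  define f where "f = (\<lambda>c. indicator {1/4..1} c * v (c / cN))"
  have umeas: "u \<in> borel_measurable lborel" unfolding u_def by measurable
  have vmeas: "v \<in> borel_measurable lborel" unfolding v_def by measurable
  have fmeas: "f \<in> borel_measurable lborel" unfolding f_def v_def by measurable
  have fsmeas: "(\<lambda>d. f (0 + cN * d)) \<in> borel_measurable lborel" unfolding f_def v_def by measurable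
  have vint: "integrable lborel v"
    by (rule Bochner_Integration.integrable_bound[OF ind_int[of "1/4" 2] vmeas]) (auto simp: v_def indicator_def)
  have uint: "integrable lborel u"
    by (rule Bochner_Integration.integrable_bound[OF ind_int[of "1/4" 1] umeas]) (auto simp: u_def indicator_def)
  have fint: "integrable lborel f"
    by (rule Bochner_Integration.integrable_bound[OF ind_int[of "1/4" 1] fmeas]) (auto simp: f_def v_def indicator_def)
  have fsint: "integrable lborel (\<lambda>d. f (0 + cN * d))"
    by (rule Bochner_Integration.integrable_bound[OF vint fsmeas]) (use cN in \<open>auto intro!: AE_I2 simp: f_def v_def indicator_def ac_simps\<close>)
  have intu: "integral\<^sup>L lborel u < 1/4" using N1 unfolding u_def a_def by simp
  have intv: "integral\<^sup>L lborel v < 1/4" using N2 unfolding v_def yN by simp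
  have vnn: "integral\<^sup>L lborel v \<ge> 0" by (rule integral_nonneg_AE) (auto simp: v_def)
  have vnn': "v t \<ge> 0" for t by (simp add: v_def)
  have fle: "f (0 + cN * d) \<le> v d" for d
  proof -
    have cd: "cN * d / cN = d" using cN by simp
    have "f (0 + cN * d) = indicator {1/4..1} (cN * d) * v d" unfolding f_def cd by simp
    also have "\<dots> \<le> v d" by (rule mult_left_le_one_le) (auto simp: vnn' indicator_def)
    finally show ?thesis .
  qed
  have aff: "integral\<^sup>L lborel f = \<bar>cN\<bar> *\<^sub>R integral\<^sup>L lborel (\<lambda>d. f (0 + cN * d))"
    by (rule lborel_integral_real_affine) (use cN in simp)
  have i1: "integral\<^sup>L lborel (\<lambda>d. f (0 + cN * d)) \<le> integral\<^sup>L lborel v"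
    by (rule integral_mono[OF fsint vint fle])
  have i2: "integral\<^sup>L lborel (\<lambda>d. f (0 + cN * d)) \<ge> 0"
    by (rule integral_nonneg_AE) (simp add: f_def vnn')
  have "integral\<^sup>L lborel f = cN * integral\<^sup>L lborel (\<lambda>d. f (0 + cN * d))" using aff cN by simp
  also have "\<dots> \<le> integral\<^sup>L lborel (\<lambda>d. f (0 + cN * d))" by (rule mult_left_le_one_le) (use cN i2 in auto)
  also have "\<dots> \<le> integral\<^sup>L lborel v" by (rule i1)
  finally have intf: "integral\<^sup>L lborel f < 1/4" using intv by simp
  have unn: "u t \<ge> 0" for t by (simp add: u_def)
  have fnn: "f t \<ge> 0" for t by (simp add: f_def v_def)
  have "\<exists>c\<in>{1/4..1}. u c + f c < 1"
  proof (rule ccontr)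
    assume A: "\<not> ?thesis"
    have le: "indicator {1/4..1} t \<le> u t + f t" for t
    proof (cases "t \<in> {1/4..1}")
      case True then show ?thesis using A by (simp add: not_less)
    next
      case False then show ?thesis using unn[of t] fnn[of t] by simp
    qed
    have "integral\<^sup>L lborel (indicator {1/4..1} :: real \<Rightarrow> real) \<le> integral\<^sup>L lborel (\<lambda>t. u t + f t)"
      by (rule integral_mono[OF ind_int]) (use uint fint le in auto)
    also have "\<dots> = integral\<^sup>L lborel u + integral\<^sup>L lborel f" by (rule Bochner_Integration.integral_add[OF uint fint])
    finally show False using intu intf by simp
  qed
  then obtain t where t: "t \<in> {1/4..1}" "u t + f t < 1" by blast
  have tc: "t / cN \<in> {1/4..2}" using t cN by (auto simp: field_simps)
  have u01: "u t = (if \<eta> \<le> \<bar>L (t * a) / L a - 1\<bar> then 1 else 0)" using t(1) by (simp add: u_def)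
  have f01: "f t = (if \<eta> \<le> \<bar>L (t / cN * (cN * a)) / L (cN * a) - 1\<bar> then 1 else 0)"
    using t(1) tc by (simp add: f_def v_def)
  have ut: "\<not> \<eta> \<le> \<bar>L (t * a) / L a - 1\<bar>"
  proof
    assume "\<eta> \<le> \<bar>L (t * a) / L a - 1\<bar>"
    then have "u t = 1" using u01 by simp
    then show False using t(2) fnn[of t] by simp
  qed
  have vt: "\<not> \<eta> \<le> \<bar>L (t / cN * (cN * a)) / L (cN * a) - 1\<bar>"
  proof
    assume "\<eta> \<le> \<bar>L (t / cN * (cN * a)) / L (cN * a) - 1\<bar>"
    then have "f t = 1" using f01 by simp
    then show False using t(2) unn[of t] by simp
  qed
  have tca: "t / cN * (cN * a) = t * a" using cN by simp
  have a0: "a \<ge> 0" "a \<ge> 8 * X1" using aX by auto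
  have pos1: "L a > 0" by (rule X1) (use aX in auto)
  have "cN * a \<ge> (1/2) * a" by (rule mult_right_mono) (use cN a0 in auto)
  then have pos2: "L (cN * a) > 0" by (intro X1) (use a0 in linarith)
  have "t * a \<ge> (1/4) * a" by (rule mult_right_mono) (use t a0 in auto)
  then have pos3: "L (t * a) > 0" by (intro X1) (use a0 in linarith)
  have "\<bar>L (cN * a) / L a - 1\<bar> \<le> \<epsilon>"
    by (rule ratio_aux[OF pos1 pos2 pos3 \<epsilon>]) (use ut vt tca in \<open>auto simp: \<eta>_def\<close>)
  then show False using xc(3)[of N] unfolding cN_def a_def by simp
qed

lemma exp_le_aux: "x \<ge> 0 \<Longrightarrow> exp x \<le> 1 + x * exp (x::real)"
proof -
  assume x: "x \<ge> 0"
  have "1 + (- x) \<le> exp (- x)" by (rule exp_ge_add_one_self)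
  then have "(1 - x) * exp x \<le> exp (-x) * exp x" by (intro mult_right_mono) auto
  then show ?thesis by (simp add: exp_minus field_simps)
qed

lemma chernoff2:
  fixes p :: "nat \<Rightarrow> real" and s P \<mu> :: real
  assumes p: "\<And>j. p j \<ge> 0" and y: "y \<ge> 1" and s: "s > 0"
    and P: "(\<Sum>j\<le>y. p j) \<le> P" "P > 0" and mu: "(\<Sum>j\<le>y. real j * p j) \<le> \<mu>" "\<mu> > 0"
    and th: "2 * real K * \<mu> / (s * P) \<le> 1"
  shows "(\<Sum>xs\<in>{xs. set xs \<subseteq> {..y} \<and> length xs = K \<and> real (sum_list xs) \<ge> s}. prod_list (map p xs))
     \<le> P ^ K * (2 * real K * \<mu> / (s * P)) powr (s / (2 * real y))"
proof (cases "K = 0")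
  case True
  then have e: "{xs. set xs \<subseteq> {..y} \<and> length xs = K \<and> real (sum_list xs) \<ge> s} = {}" using s by auto
  show ?thesis unfolding e using P by simp
next
  case False
  define \<theta> where "\<theta> = 2 * real K * \<mu> / (s * P)"
  have \<theta>0: "\<theta> > 0" using False s P mu unfolding \<theta>_def by auto
  define u where "u = 1 / \<theta>"
  have \<theta>1: "\<theta> \<le> 1" using th unfolding \<theta>_def .
  have u1: "u \<ge> 1" unfolding u_def using \<theta>0 \<theta>1 by (simp add: le_divide_eq)
  define l where "l = ln u / real y"
  have l0: "l \<ge> 0" using u1 y unfolding l_def by auto
  have ly: "l * real y = ln u" using y unfolding l_def by simp
  have expj: "exp (l * real j) \<le> u" if "j \<le> y" for j
  proof -
    have "exp (l * real j) \<le> exp (l * real y)" using l0 that by (intro exp_mono mult_left_mono) auto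
    also have "\<dots> = u" using ly u1 by simp
    finally show ?thesis .
  qed
  have "(\<Sum>j\<le>y. p j * exp (l * real j)) \<le> (\<Sum>j\<le>y. p j + l * u * (real j * p j))"
  proof (rule sum_mono)
    fix j assume "j \<in> {..y}"
    then have lj: "l * real j \<ge> 0" "exp (l * real j) \<le> u" using l0 expj[of j] by auto
    have "exp (l * real j) \<le> 1 + (l * real j) * exp (l * real j)" by (rule exp_le_aux[OF lj(1)])
    also have "\<dots> \<le> 1 + (l * real j) * u" using lj by (intro add_left_mono mult_left_mono) auto
    finally have "exp (l * real j) \<le> 1 + (l * real j) * u" .
    then have "p j * exp (l * real j) \<le> p j * (1 + (l * real j) * u)" using p by (intro mult_left_mono) auto
    then show "p j * exp (l * real j) \<le> p j + l * u * (real j * p j)" by (simp add: algebra_simps)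
  qed
  also have "\<dots> = (\<Sum>j\<le>y. p j) + l * u * (\<Sum>j\<le>y. real j * p j)"
    by (simp add: sum.distrib sum_distrib_left)
  also have "\<dots> \<le> P + l * u * \<mu>" using P mu l0 u1 by (intro add_mono mult_left_mono) auto
  finally have S: "(\<Sum>j\<le>y. p j * exp (l * real j)) \<le> P + l * u * \<mu>" .
  have S0: "(\<Sum>j\<le>y. p j * exp (l * real j)) \<ge> 0" using p by (intro sum_nonneg) auto
  have "P + l * u * \<mu> = P * (1 + l * u * \<mu> / P)" using P by (simp add: field_simps)
  also have "\<dots> \<le> P * exp (l * u * \<mu> / P)" using P by (intro mult_left_mono) auto
  finally have S2: "P + l * u * \<mu> \<le> P * exp (l * u * \<mu> / P)" .
  have "(\<Sum>xs\<in>{xs. set xs \<subseteq> {..y} \<and> length xs = K \<and> real (sum_list xs) \<ge> s}. prod_list (map p xs))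
     \<le> exp (- l * s) * (\<Sum>j\<le>y. p j * exp (l * real j))^K"
    by (rule chernoff_lists[OF p l0])
  also have "\<dots> \<le> exp (- l * s) * (P * exp (l * u * \<mu> / P))^K"
    using S S2 S0 by (intro mult_left_mono power_mono) auto
  also have "\<dots> = P ^ K * exp (l * (real K * u * \<mu> / P - s))"
  proof -
    have e1: "(P * exp (l * u * \<mu> / P))^K = P^K * exp (real K * (l * u * \<mu> / P))"
      by (simp only: power_mult_distrib exp_of_nat_mult)
    have e2: "l * (real K * u * \<mu> / P - s) = real K * (l * u * \<mu> / P) + (- l * s)"
      by (simp add: algebra_simps)
    show ?thesis unfolding e1 e2 exp_add by (simp only: ac_simps)
  qed
  also have "real K * u * \<mu> / P = s / 2" using \<theta>0 s P mu(2) False unfolding u_def \<theta>_def by (simp add: field_simps)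
  also have "exp (l * (s / 2 - s)) = \<theta> powr (s / (2 * real y))"
  proof -
    have "l * (s / 2 - s) = (s / (2 * real y)) * ln \<theta>"
      using y unfolding l_def u_def using \<theta>0 by (simp add: ln_div field_simps)
    then show ?thesis using \<theta>0 by (simp add: powr_def)
  qed
  finally show ?thesis unfolding \<theta>_def .
qed

lemma powr_aux:
  fixes \<theta> a b :: real
  assumes "0 \<le> \<theta>" "\<theta> \<le> 1" "0 < b" "b * 2^i \<le> a"
  shows "\<theta> powr a \<le> (\<theta> powr b)^(i+1)"
proof (cases "\<theta> = 0")
  case True then show ?thesis by simp
next
  case False
  then have t: "\<theta> > 0" using assms by auto
  have "\<theta> powr a \<le> \<theta> powr (b * 2^i)" by (rule powr_mono') (use assms in auto)
  also have "\<dots> = (\<theta> powr b)^(2^i)" using t by (simp add: powr_power mult.commute)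
  also have "\<dots> \<le> (\<theta> powr b)^(i+1)"
  proof (rule power_decreasing)
    show "i + 1 \<le> 2^i" by (induction i) auto
    show "\<theta> powr b \<le> 1" by (rule powr_le1) (use assms in auto)
  qed simp
  finally show ?thesis .
qed

lemma geom_aux:
  fixes x :: real
  assumes "0 \<le> x" "x \<le> 1/2"
  shows "(\<Sum>i\<le>n. x^(i+1)) \<le> 2 * x"
proof -
  have eq: "(\<Sum>i\<le>n. x^(i+1)) * (1 - x) = x - x^(n+2)" for n
  proof (induction n)
    case (Suc n)
    have "(\<Sum>i\<le>Suc n. x^(i+1)) * (1 - x) = (\<Sum>i\<le>n. x^(i+1)) * (1 - x) + x^(n+2) * (1 - x)"
      by (simp add: distrib_right)
    also have "\<dots> = x - x^(n+2) + x^(n+2) * (1 - x)" using Suc by simp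
    also have "\<dots> = x - x^(Suc n + 2)" by (simp add: algebra_simps)
    finally show ?case .
  qed (simp add: algebra_simps power2_eq_square)
  have h1: "(\<Sum>i\<le>n. x^(i+1)) * (1 - x) \<le> x" unfolding eq using assms by simp
  have "x * (2 * x) \<le> x * 1" by (rule mult_left_mono) (use assms in auto)
  then have h2: "x \<le> 2 * x * (1 - x)" by (simp add: algebra_simps)
  from h1 h2 have "(\<Sum>i\<le>n. x^(i+1)) * (1 - x) \<le> 2 * x * (1 - x)" by linarith
  then show ?thesis using assms by (simp add: mult_le_cancel_right)
qed

locale fin =
  fixes p :: "nat \<Rightarrow> real" and n k :: nat and x C P \<mu> \<theta> r :: real
  assumes p0: "\<And>j. p j \<ge> 0" and n1: "n \<ge> 1" and k1: "k \<ge> 1" and pn: "p n > 0"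
    and x: "0 < x" "x \<le> 1/4" and C0: "C \<ge> 0"
    and h1: "\<And>m. (1 - x) * real n \<le> real m \<Longrightarrow> m \<le> n \<Longrightarrow> (1 - x) * p n \<le> p m \<and> p m \<le> (1 + x) / (1 - x) * p n"
    and h2: "\<And>m. 1 \<le> m \<Longrightarrow> m \<le> n \<Longrightarrow> p m \<le> C * (real n / real m)^2 * p n"
    and P_def: "P = (\<Sum>j\<le>n. p j)" and mu_def: "\<mu> = (\<Sum>j\<le>n. real j * p j)"
    and th_def: "\<theta> = 2 * real (k - 1) * \<mu> / (x * real n * P)" and r_def: "r = \<theta> powr (x / 2)"
    and th1: "\<theta> \<le> 1" and r8: "r \<le> 1/8" and Cr: "8 * C * r \<le> x"
begin

definition "S = {ys. set ys \<subseteq> {..n} \<and> length ys = k - 1}"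
definition "B = {ys \<in> S. real (sum_list ys) \<le> x * real n}"
definition "X = {xs. length xs = k \<and> sum_list xs = n}"
definition "A = (\<Sum>xs\<in>X. list_prob p xs)"

lemma finS: "finite S" unfolding S_def by (rule finite_lists_length_eq) simp
lemma finX: "finite X" unfolding X_def using finite_len_sum[of k n "\<lambda>_. True"] by simp
lemma BS: "B \<subseteq> S" unfolding B_def by auto
lemma finB: "finite B" using finS BS finite_subset by blast

lemma Q0: "list_prob p ys \<ge> 0" by (rule list_prob_nonneg[of p, OF p0])

lemma P_ge: "P \<ge> p n" unfolding P_def by (rule member_le_sum) (use p0 in auto)
lemma P_pos: "P > 0" using P_ge pn by linarith
lemma mu_ge: "\<mu> \<ge> real n * p n" unfolding mu_def by (rule member_le_sum) (use p0 in auto)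
lemma mu_pos: "\<mu> > 0"
proof -
  have "real n * p n > 0" using pn n1 by simp
  then show ?thesis using mu_ge by linarith
qed
lemma th0: "\<theta> \<ge> 0" unfolding th_def using x mu_pos P_pos by auto
lemma r0: "r \<ge> 0" unfolding r_def by simp

lemma sumQ: "(\<Sum>ys\<in>S. list_prob p ys) = P ^ (k - 1)"
  unfolding S_def list_prob_def P_def by (rule sum_lists_prod) simp

lemma A_eq: "A = (\<Sum>ys\<in>S. Fnum p k n ys)"
proof -
  have img: "tau ` X \<subseteq> S"
  proof
    fix ys assume "ys \<in> tau ` X"
    then obtain xs where xs: "xs \<in> X" "ys = tau xs" by auto
    then have l: "length xs = k" "sum_list xs = n" by (auto simp: X_def)
    from tau_preimage[OF l(1) k1 l(2) refl] show "ys \<in> S" unfolding xs(2) S_def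
      by (auto intro: order_trans[OF _ diff_le_self])
  qed
  have "(\<Sum>ys\<in>S. Fnum p k n ys) = (\<Sum>ys\<in>S. \<Sum>xs\<in>{xs \<in> X. tau xs = ys}. list_prob p xs)"
    unfolding Fnum_def X_def by (intro sum.cong) (auto intro!: sum.cong)
  also have "\<dots> = A" unfolding A_def by (rule sum.group[OF finX finS img])
  finally show ?thesis by simp
qed

lemma Fnum0: "Fnum p k n ys \<ge> 0" unfolding Fnum_def by (intro sum_nonneg Q0)

lemma Fnum_outside: "ys \<notin> S \<Longrightarrow> Fnum p k n ys = 0"
proof -
  assume ys: "ys \<notin> S"
  have c: "\<not> (length ys = k - 1 \<and> sum_list ys \<le> n \<and> (\<forall>y\<in>set ys. y \<le> n - sum_list ys))"
    using ys unfolding S_def by (auto intro: order_trans[OF _ diff_le_self])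
  have "Fnum p k n ys \<le> (if length ys = k - 1 \<and> sum_list ys \<le> n \<and> (\<forall>y\<in>set ys. y \<le> n - sum_list ys)
            then real k * p (n - sum_list ys) * list_prob p ys else 0)" by (rule Fnum_upper[of p, OF p0 k1])
  also have "\<dots> = 0" by (rule if_not_P[OF c])
  finally have "Fnum p k n ys \<le> 0" .
  then show ?thesis using Fnum0[of ys] by simp
qed

lemma lower_F:
  assumes ys: "ys \<in> B"
  shows "Fnum p k n ys \<ge> real k * ((1 - x) * p n) * list_prob p ys"
proof -
  have sy: "real (sum_list ys) \<le> x * real n" and len: "length ys = k - 1" using ys unfolding B_def S_def by auto
  have sn: "sum_list ys \<le> n"
  proof -
    have "x * real n \<le> real n" by (rule mult_left_le_one_le) (use x in auto)
    then show ?thesis using sy by linarith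
  qed
  have m_ge: "(1 - x) * real n \<le> real (n - sum_list ys)" using sy sn by (simp add: algebra_simps)
  have lt: "\<forall>y\<in>set ys. y < n - sum_list ys"
  proof
    fix y assume "y \<in> set ys"
    then have "real y \<le> real (sum_list ys)" by (simp add: member_le_sum_list)
    also have "\<dots> \<le> x * real n" by (rule sy)
    also have "\<dots> < (1 - x) * real n" using x n1 by (intro mult_strict_right_mono) auto
    also have "\<dots> \<le> real (n - sum_list ys)" by (rule m_ge)
    finally show "y < n - sum_list ys" by simp
  qed
  have "Fnum p k n ys \<ge> real k * p (n - sum_list ys) * list_prob p ys"
    by (rule Fnum_lower[of p, OF p0 k1 len sn lt])
  moreover have "(1 - x) * p n \<le> p (n - sum_list ys)" using h1[OF m_ge] by simp
  then have "real k * ((1 - x) * p n) * list_prob p ys \<le> real k * p (n - sum_list ys) * list_prob p ys"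
    using Q0[of ys] by (intro mult_right_mono mult_left_mono) auto
  ultimately show ?thesis by linarith
qed

lemma tail_B: "(\<Sum>ys\<in>S - B. list_prob p ys) \<le> P ^ (k - 1) * r"
proof -
  have sub: "S - B \<subseteq> {xs. set xs \<subseteq> {..n} \<and> length xs = k - 1 \<and> real (sum_list xs) \<ge> x * real n}"
    unfolding S_def B_def by auto
  have fin2: "finite {xs. set xs \<subseteq> {..n} \<and> length xs = k - 1 \<and> real (sum_list xs) \<ge> x * real n}"
    by (rule finite_subset[OF _ finite_lists_length_eq[of "{..n}" "k-1"]]) auto
  have "(\<Sum>ys\<in>S - B. list_prob p ys) \<le> (\<Sum>ys\<in>{xs. set xs \<subseteq> {..n} \<and> length xs = k - 1 \<and> real (sum_list xs) \<ge> x * real n}. prod_list (map p ys))"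
    unfolding list_prob_def by (rule sum_mono2[OF fin2 sub]) (use Q0 in \<open>auto simp: list_prob_def\<close>)
  also have "\<dots> \<le> P ^ (k - 1) * (2 * real (k - 1) * \<mu> / (x * real n * P)) powr (x * real n / (2 * real n))"
    by (rule chernoff2[of p, OF p0 n1]) (use x n1 P_pos mu_pos th1 in \<open>auto simp: P_def mu_def th_def\<close>)
  also have "x * real n / (2 * real n) = x / 2" using n1 by simp
  finally show ?thesis unfolding th_def[symmetric] r_def[symmetric] .
qed

end

context fin begin

definition "CS i = {ys. set ys \<subseteq> {..n div 2^i} \<and> length ys = k - 1 \<and> real (sum_list ys) \<ge> x * real n}"

definition "bnd ys = (if length ys = k - 1 \<and> sum_list ys \<le> n \<and> (\<forall>y\<in>set ys. y \<le> n - sum_list ys)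
            then real k * p (n - sum_list ys) * list_prob p ys else 0)"

lemma bnd0: "bnd ys \<ge> 0" unfolding bnd_def using p0 Q0 by auto

lemma finCS: "finite (CS i)"
  unfolding CS_def by (rule finite_subset[OF _ finite_lists_length_eq[of "{..n div 2^i}" "k-1"]]) auto

lemma CS_bound: "(\<Sum>ys\<in>CS i. list_prob p ys) \<le> P ^ (k - 1) * r ^ (i + 1)"
proof (cases "n div 2^i = 0")
  case True
  have "CS i = {}"
  proof (rule ccontr)
    assume "CS i \<noteq> {}"
    then obtain ys where ys: "ys \<in> CS i" by blast
    then have "\<forall>y\<in>set ys. y = 0" using True unfolding CS_def by auto
    then have "real (sum_list ys) = 0" by (simp add: sum_list_eq_0_iff)
    moreover have "x * real n > 0" using x n1 by simp
    moreover have "real (sum_list ys) \<ge> x * real n" using ys unfolding CS_def by auto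
    ultimately show False by linarith
  qed
  then show ?thesis using P_pos r0 by simp
next
  case False
  define y where "y = n div 2^i"
  have y1: "y \<ge> 1" using False unfolding y_def by simp
  have yn: "y \<le> n" unfolding y_def by simp
  have y2: "y * 2^i \<le> n" unfolding y_def by simp
  have sP: "(\<Sum>j\<le>y. p j) \<le> P" unfolding P_def by (rule sum_mono2) (use yn p0 in auto)
  have smu: "(\<Sum>j\<le>y. real j * p j) \<le> \<mu>" unfolding mu_def by (rule sum_mono2) (use yn p0 in auto)
  have "(\<Sum>ys\<in>CS i. list_prob p ys) \<le> P ^ (k - 1) * (2 * real (k - 1) * \<mu> / (x * real n * P)) powr (x * real n / (2 * real y))"
    unfolding CS_def list_prob_def y_def[symmetric]
    by (rule chernoff2[of p, OF p0 y1 _ sP P_pos smu mu_pos]) (use x n1 th1 in \<open>auto simp: th_def\<close>)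
  also have "\<dots> = P ^ (k - 1) * \<theta> powr (x * real n / (2 * real y))" unfolding th_def ..
  also have "\<dots> \<le> P ^ (k - 1) * (\<theta> powr (x / 2)) ^ (i + 1)"
  proof (rule mult_left_mono)
    have "real y * 2^i \<le> real n" using y2 by (metis of_nat_le_iff of_nat_mult of_nat_numeral of_nat_power)
    then have "x / 2 * 2^i \<le> x * real n / (2 * real y)" using y1 x
      by (simp add: field_simps)
    then show "\<theta> powr (x * real n / (2 * real y)) \<le> (\<theta> powr (x / 2)) ^ (i + 1)"
      by (intro powr_aux) (use th0 th1 x in auto)
  qed (use P_pos in simp)
  finally show ?thesis unfolding r_def .
qed

lemma bnd_SB:
  assumes ys: "ys \<in> S - B"
  shows "bnd ys \<le> (\<Sum>i\<le>n. real k * C * 4^(i+1) * p n * (if ys \<in> CS i then list_prob p ys else 0))"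
proof (cases "length ys = k - 1 \<and> sum_list ys \<le> n \<and> (\<forall>y\<in>set ys. y \<le> n - sum_list ys)")
  case False
  then have "bnd ys = 0" unfolding bnd_def by (rule if_not_P)
  moreover have "(\<Sum>i\<le>n. real k * C * 4^(i+1) * p n * (if ys \<in> CS i then list_prob p ys else 0)) \<ge> 0"
    by (intro sum_nonneg) (use C0 pn Q0 in auto)
  ultimately show ?thesis by simp
next
  case True
  define m where "m = n - sum_list ys"
  have len: "length ys = k - 1" and sn: "sum_list ys \<le> n" and le: "\<forall>y\<in>set ys. y \<le> m"
    using True unfolding m_def by auto
  have big: "real (sum_list ys) > x * real n" using ys unfolding B_def S_def by auto
  have m1: "m \<ge> 1"
  proof (rule ccontr)
    assume "\<not> m \<ge> 1"
    then have "\<forall>y\<in>set ys. y = 0" using le by auto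
    then have "real (sum_list ys) = 0" by (simp add: sum_list_eq_0_iff)
    moreover have "x * real n \<ge> 0" using x by simp
    ultimately show False using big by linarith
  qed
  have mn: "m \<le> n" unfolding m_def by simp
  have d1: "n div m \<ge> 1" using m1 mn by (simp add: div_greater_zero_iff Suc_le_eq)
  obtain i where i: "2^i \<le> n div m" "n div m < 2^(i+1)" using ex_power_ivl1[of 2 "n div m"] d1 by auto
  have "i < 2^i" by (rule less_exp)
  also have "2^i \<le> n" using i(1) div_le_dividend order_trans by blast
  finally have iN: "i \<le> n" by simp
  have im: "2^i * m \<le> n"
    using i(1) m1 by (metis less_eq_div_iff_mult_less_eq mult.commute not_one_le_zero not_less zero_less_iff_neq_zero)
  have nm: "n < 2^(i+1) * m"
  proof -
    have "n = n div m * m + n mod m" by simp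
    moreover have "n mod m < m" using m1 by simp
    ultimately have "n < (n div m + 1) * m" by (metis add_less_cancel_left mult_Suc Suc_eq_plus1 add.commute)
    also have "\<dots> \<le> 2^(i+1) * m" using i(2) by (intro mult_right_mono) auto
    finally show ?thesis .
  qed
  have inCS: "ys \<in> CS i"
  proof -
    have "m \<le> n div 2^i" using im by (simp add: less_eq_div_iff_mult_less_eq mult.commute)
    then have "set ys \<subseteq> {..n div 2^i}" using le by auto
    then show ?thesis unfolding CS_def using len big by auto
  qed
  have ratio: "(real n / real m)^2 \<le> 4^(i+1)"
  proof -
    have "real n < 2^(i+1) * real m" using nm by (metis of_nat_less_iff of_nat_mult of_nat_numeral of_nat_power)
    then have "real n / real m \<le> 2^(i+1)" using m1 by (simp add: divide_le_eq)
    then have "(real n / real m)^2 \<le> (2^(i+1))^2" by (rule power_mono) simp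
    also have "\<dots> = 4^(i+1)" by (simp only: power2_eq_square power_mult_distrib[symmetric]) simp
    finally show ?thesis .
  qed
  have "bnd ys = real k * p m * list_prob p ys" unfolding bnd_def m_def using True by simp
  also have "\<dots> \<le> real k * (C * (real n / real m)^2 * p n) * list_prob p ys"
    using h2[OF m1 mn] Q0[of ys] by (intro mult_right_mono mult_left_mono) auto
  also have "\<dots> \<le> real k * (C * 4^(i+1) * p n) * list_prob p ys"
    using ratio C0 pn Q0[of ys] by (intro mult_right_mono mult_left_mono) auto
  also have "\<dots> = real k * C * 4^(i+1) * p n * (if ys \<in> CS i then list_prob p ys else 0)"
    using inCS by simp
  also have "\<dots> \<le> (\<Sum>i\<le>n. real k * C * 4^(i+1) * p n * (if ys \<in> CS i then list_prob p ys else 0))"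
    by (rule member_le_sum[of i "{..n}" "\<lambda>i. real k * C * 4^(i+1) * p n * (if ys \<in> CS i then list_prob p ys else 0)"])
       (use iN C0 pn Q0 in auto)
  finally show ?thesis .
qed

end

context fin begin

lemma upper_A: "A \<le> real k * P^(k-1) * ((1 + x) / (1 - x) * p n) + 8 * real k * C * p n * P^(k-1) * r"
proof -
  define M1 where "M1 = (1 + x) / (1 - x) * p n"
  have M10: "M1 \<ge> 0" unfolding M1_def using x pn by auto
  have "A = (\<Sum>ys\<in>S. Fnum p k n ys)" by (rule A_eq)
  also have "\<dots> \<le> (\<Sum>ys\<in>S. bnd ys)" unfolding bnd_def by (intro sum_mono Fnum_upper[of p, OF p0 k1])
  also have "\<dots> = (\<Sum>ys\<in>S - B. bnd ys) + (\<Sum>ys\<in>B. bnd ys)" by (rule sum.subset_diff[OF BS finS])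
  also have "(\<Sum>ys\<in>B. bnd ys) \<le> real k * P^(k-1) * M1"
  proof -
    have "(\<Sum>ys\<in>B. bnd ys) \<le> (\<Sum>ys\<in>B. real k * M1 * list_prob p ys)"
    proof (rule sum_mono)
      fix ys assume ys: "ys \<in> B"
      show "bnd ys \<le> real k * M1 * list_prob p ys"
      proof (cases "length ys = k - 1 \<and> sum_list ys \<le> n \<and> (\<forall>y\<in>set ys. y \<le> n - sum_list ys)")
        case True
        have sy: "real (sum_list ys) \<le> x * real n" using ys unfolding B_def by auto
        have "(1 - x) * real n \<le> real (n - sum_list ys)" using sy True by (simp add: algebra_simps)
        then have "p (n - sum_list ys) \<le> M1" unfolding M1_def using h1[of "n - sum_list ys"] by auto
        then show ?thesis unfolding bnd_def using True Q0[of ys] by (auto intro!: mult_right_mono mult_left_mono)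
      next
        case False
        then show ?thesis unfolding bnd_def using M10 Q0[of ys] by auto
      qed
    qed
    also have "\<dots> = real k * M1 * (\<Sum>ys\<in>B. list_prob p ys)" by (simp add: sum_distrib_left)
    also have "\<dots> \<le> real k * M1 * (\<Sum>ys\<in>S. list_prob p ys)"
      by (intro mult_left_mono sum_mono2[OF finS BS]) (use Q0 M10 in auto)
    also have "\<dots> = real k * P^(k-1) * M1" unfolding sumQ by simp
    finally show ?thesis .
  qed
  also have "(\<Sum>ys\<in>S - B. bnd ys) \<le> 8 * real k * C * p n * P^(k-1) * r"
  proof -
    have "(\<Sum>ys\<in>S - B. bnd ys) \<le> (\<Sum>ys\<in>S - B. \<Sum>i\<le>n. real k * C * 4^(i+1) * p n * (if ys \<in> CS i then list_prob p ys else 0))"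
      by (rule sum_mono) (rule bnd_SB)
    also have "\<dots> = (\<Sum>i\<le>n. real k * C * 4^(i+1) * p n * (\<Sum>ys\<in>S - B. (if ys \<in> CS i then list_prob p ys else 0)))"
      by (subst sum.swap) (simp add: sum_distrib_left)
    also have "\<dots> \<le> (\<Sum>i\<le>n. real k * C * 4^(i+1) * p n * (P^(k-1) * r^(i+1)))"
    proof (rule sum_mono)
      fix i assume "i \<in> {..n}"
      have "(\<Sum>ys\<in>S - B. (if ys \<in> CS i then list_prob p ys else 0)) = (\<Sum>ys\<in>(S - B) \<inter> CS i. list_prob p ys)"
        by (rule sum.inter_restrict[symmetric]) (use finS in auto)
      also have "\<dots> \<le> (\<Sum>ys\<in>CS i. list_prob p ys)" by (rule sum_mono2[OF finCS]) (use Q0 in auto)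
      also have "\<dots> \<le> P ^ (k - 1) * r ^ (i + 1)" by (rule CS_bound)
      finally show "real k * C * 4^(i+1) * p n * (\<Sum>ys\<in>S - B. (if ys \<in> CS i then list_prob p ys else 0))
          \<le> real k * C * 4^(i+1) * p n * (P^(k-1) * r^(i+1))"
        by (rule mult_left_mono) (use C0 pn in auto)
    qed
    also have "\<dots> = real k * C * p n * P^(k-1) * (\<Sum>i\<le>n. (4 * r)^(i+1))"
      by (simp add: sum_distrib_left power_mult_distrib algebra_simps)
    also have "\<dots> \<le> real k * C * p n * P^(k-1) * (2 * (4 * r))"
      by (intro mult_left_mono geom_aux) (use r0 r8 C0 pn P_pos in auto)
    finally show ?thesis by (simp add: algebra_simps)
  qed
  finally show ?thesis unfolding M1_def by (simp add: algebra_simps)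
qed

end

context fin begin

lemma Z_pos: "P^(k-1) > 0" using P_pos by simp

lemma sumB: "(\<Sum>ys\<in>B. list_prob p ys) \<ge> P^(k-1) * (1 - r)"
proof -
  have "(\<Sum>ys\<in>S. list_prob p ys) = (\<Sum>ys\<in>S - B. list_prob p ys) + (\<Sum>ys\<in>B. list_prob p ys)"
    by (rule sum.subset_diff[OF BS finS])
  then show ?thesis using tail_B sumQ by (simp add: algebra_simps)
qed

lemma A_pos: "A > 0"
proof -
  have "P^(k-1) * (1 - r) > 0" using Z_pos r8 by (intro mult_pos_pos) auto
  then have "(\<Sum>ys\<in>B. list_prob p ys) > 0" using sumB by linarith
  then obtain ys where ys: "ys \<in> B" "list_prob p ys > 0"
    by (meson not_le sum_nonpos)
  have "0 < real k * ((1 - x) * p n) * list_prob p ys" using k1 x pn ys(2) by simp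
  also have "\<dots> \<le> Fnum p k n ys" by (rule lower_F[OF ys(1)])
  also have "\<dots> \<le> (\<Sum>ys\<in>S. Fnum p k n ys)" by (rule member_le_sum) (use ys BS Fnum0 finS in auto)
  finally show ?thesis using A_eq by simp
qed

lemma ratio_ineq:
  "(1 - 4 * x) * ((1 + x) / (1 - x) + 8 * C * r) \<le> 1 - x"
proof -
  have x1: "1 - x > 0" using x by simp
  have "(1 - 4 * x) * ((1 + x) / (1 - x) + 8 * C * r) \<le> (1 - 4 * x) * ((1 + x) / (1 - x) + x)"
    using Cr x by (intro mult_left_mono) auto
  also have "\<dots> = (1 - 4 * x) * (1 + 2 * x - x^2) / (1 - x)" using x1 by (simp add: field_simps power2_eq_square)
  also have "\<dots> \<le> (1 - x)^2 / (1 - x)"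
  proof (rule divide_right_mono)
    have "x^2 * (4 * x) \<le> x^2 * 10" using x by (intro mult_left_mono) auto
    then show "(1 - 4 * x) * (1 + 2 * x - x^2) \<le> (1 - x)^2"
      by (simp add: algebra_simps power2_eq_square power3_eq_cube)
  qed (use x1 in simp)
  also have "\<dots> = 1 - x" using x1 by (simp add: power2_eq_square)
  finally show ?thesis .
qed

lemma f_ge:
  assumes ys: "ys \<in> B"
  shows "Fnum p k n ys / A \<ge> (1 - 4 * x) * (list_prob p ys / P^(k-1))"
proof -
  define D where "D = (1 + x) / (1 - x) + 8 * C * r"
  have D1: "(1 + x) / (1 - x) > 0" using x by (intro divide_pos_pos) auto
  have D2: "8 * C * r \<ge> 0" using C0 r0 by simp
  have D0: "D > 0" unfolding D_def using D1 D2 by linarith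
  have AD: "A \<le> real k * P^(k-1) * p n * D" using upper_A unfolding D_def by (simp add: algebra_simps)
  have kZp: "real k * P^(k-1) * p n > 0" using k1 Z_pos pn by simp
  have q: "list_prob p ys / P^(k-1) \<ge> 0" using Q0[of ys] Z_pos by simp
  have r1: "1 - 4 * x \<le> (1 - x) / D" using ratio_ineq D0 unfolding D_def[symmetric] by (simp add: pos_le_divide_eq)
  have "(1 - 4 * x) * (list_prob p ys / P^(k-1)) \<le> (1 - x) / D * (list_prob p ys / P^(k-1))"
    by (rule mult_right_mono[OF r1 q])
  also have "\<dots> = real k * ((1 - x) * p n) * list_prob p ys / (real k * P^(k-1) * p n * D)"
    using kZp D0 pn k1 P_pos by (simp add: divide_simps)
  also have "\<dots> \<le> Fnum p k n ys / (real k * P^(k-1) * p n * D)"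
    using lower_F[OF ys] kZp D0 by (intro divide_right_mono) auto
  also have "\<dots> \<le> Fnum p k n ys / A"
    using AD A_pos Fnum0[of ys] by (intro divide_left_mono) auto
  finally show ?thesis .
qed

end

context fin begin

lemma f_eq: "cond_tau_law p k n ys = Fnum p k n ys / A"
  unfolding cond_tau_law_def Fnum_def A_def X_def ..

lemma S_eq: "{zs. length zs = k - 1 \<and> (\<forall>z\<in>set zs. z \<le> n)} = S"
  unfolding S_def by auto

lemma g_eq: "trunc_law p k n ys = (if ys \<in> S then list_prob p ys / P^(k-1) else 0)"
proof -
  have memS: "(length ys = k - 1 \<and> (\<forall>y\<in>set ys. y \<le> n)) = (ys \<in> S)" by (auto simp: S_def)
  show ?thesis unfolding trunc_law_def S_eq sumQ memS ..
qed

lemma sum_f: "(\<Sum>ys\<in>S. Fnum p k n ys / A) = 1"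
  using A_pos by (simp add: sum_divide_distrib[symmetric] A_eq[symmetric])

lemma sum_g: "(\<Sum>ys\<in>S. list_prob p ys / P^(k-1)) = 1"
  using Z_pos P_pos by (simp add: sum_divide_distrib[symmetric] sumQ)

lemma sum_min: "(\<Sum>ys\<in>S. min (Fnum p k n ys / A) (list_prob p ys / P^(k-1))) \<ge> (1 - 4 * x) * (1 - r)"
proof -
  have x4: "1 - 4 * x \<ge> 0" using x by simp
  have "(1 - 4 * x) * (1 - r) \<le> (1 - 4 * x) * ((\<Sum>ys\<in>B. list_prob p ys) / P^(k-1))"
    using sumB Z_pos x4 by (intro mult_left_mono) (auto simp: pos_le_divide_eq mult.commute)
  also have "\<dots> = (\<Sum>ys\<in>B. (1 - 4 * x) * (list_prob p ys / P^(k-1)))"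
    by (simp add: sum_distrib_left sum_divide_distrib)
  also have "\<dots> \<le> (\<Sum>ys\<in>B. min (Fnum p k n ys / A) (list_prob p ys / P^(k-1)))"
  proof (rule sum_mono)
    fix ys assume ys: "ys \<in> B"
    have "(1 - 4 * x) * (list_prob p ys / P^(k-1)) \<le> list_prob p ys / P^(k-1)"
      using x Q0[of ys] Z_pos by (intro mult_left_le_one_le) auto
    then show "(1 - 4 * x) * (list_prob p ys / P^(k-1)) \<le> min (Fnum p k n ys / A) (list_prob p ys / P^(k-1))"
      using f_ge[OF ys] by simp
  qed
  also have "\<dots> \<le> (\<Sum>ys\<in>S. min (Fnum p k n ys / A) (list_prob p ys / P^(k-1)))"
    by (rule sum_mono2[OF finS BS]) (use Fnum0 A_pos Q0 Z_pos in auto)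
  finally show ?thesis .
qed

lemma tv_bound: "tv_dist (cond_tau_law p k n) (trunc_law p k n) \<le> 4 * x + r"
proof -
  define h where "h ys = \<bar>cond_tau_law p k n ys - trunc_law p k n ys\<bar>" for ys
  have h_out: "ys \<notin> S \<Longrightarrow> h ys = 0" for ys unfolding h_def f_eq g_eq using Fnum_outside by simp
  have "infsum h UNIV = infsum h S" by (rule infsum_cong_neutral) (use h_out in auto)
  also have "\<dots> = sum h S" using finS by simp
  also have "\<dots> = (\<Sum>ys\<in>S. Fnum p k n ys / A + list_prob p ys / P^(k-1) - 2 * min (Fnum p k n ys / A) (list_prob p ys / P^(k-1)))"
    unfolding h_def f_eq g_eq by (intro sum.cong) (auto simp: min_def)
  also have "\<dots> = (\<Sum>ys\<in>S. Fnum p k n ys / A) + (\<Sum>ys\<in>S. list_prob p ys / P^(k-1)) - 2 * (\<Sum>ys\<in>S. min (Fnum p k n ys / A) (list_prob p ys / P^(k-1)))"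
    by (simp only: sum_subtractf sum.distrib sum_distrib_left[symmetric])
  also have "\<dots> = 2 - 2 * (\<Sum>ys\<in>S. min (Fnum p k n ys / A) (list_prob p ys / P^(k-1)))"
    unfolding sum_f sum_g by simp
  finally have "tv_dist (cond_tau_law p k n) (trunc_law p k n) = 1 - (\<Sum>ys\<in>S. min (Fnum p k n ys / A) (list_prob p ys / P^(k-1)))"
    unfolding tv_dist_def h_def by simp
  also have "\<dots> \<le> 1 - (1 - 4 * x) * (1 - r)" using sum_min by simp
  also have "\<dots> \<le> 4 * x + r" using x r0 by (simp add: algebra_simps)
  finally show ?thesis .
qed

lemma cmd_bound:
  assumes e: "\<epsilon> \<ge> x"
  shows "cond_max_dev p k n \<epsilon> \<le> 4 * x + r"
proof -
  define T where "T = {xs \<in> X. tau xs \<in> B}"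
  define Dv where "Dv = {xs. length xs = k \<and> sum_list xs = n \<and> \<bar>real (Max (set xs)) / real n - 1\<bar> > \<epsilon>}"
  have TX: "T \<subseteq> X" unfolding T_def by auto
  have finT: "finite T" using finX TX finite_subset by blast
  have sumT: "(\<Sum>ys\<in>B. Fnum p k n ys) = (\<Sum>xs\<in>T. list_prob p xs)"
  proof -
    have "(\<Sum>ys\<in>B. Fnum p k n ys) = (\<Sum>ys\<in>B. \<Sum>xs\<in>{xs \<in> T. tau xs = ys}. list_prob p xs)"
      unfolding Fnum_def T_def X_def by (intro sum.cong) (auto intro!: sum.cong)
    also have "\<dots> = (\<Sum>xs\<in>T. list_prob p xs)" by (rule sum.group[OF finT finB]) (auto simp: T_def)
    finally show ?thesis .
  qed
  have DvT: "Dv \<subseteq> X - T"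
  proof
    fix xs assume xs: "xs \<in> Dv"
    then have l: "length xs = k" "sum_list xs = n" and dev: "\<bar>real (Max (set xs)) / real n - 1\<bar> > \<epsilon>"
      unfolding Dv_def by auto
    have "tau xs \<notin> B"
    proof
      assume tB: "tau xs \<in> B"
      have M: "Max (set xs) = n - sum_list (tau xs)" and sn: "sum_list (tau xs) \<le> n"
        using tau_preimage[OF l(1) k1 l(2) refl] by auto
      have sy: "real (sum_list (tau xs)) \<le> x * real n" using tB unfolding B_def by auto
      have "real (Max (set xs)) / real n - 1 = - (real (sum_list (tau xs)) / real n)"
        unfolding M using sn n1 by (simp add: field_simps of_nat_diff)
      then have "\<bar>real (Max (set xs)) / real n - 1\<bar> = real (sum_list (tau xs)) / real n" by simp
      also have "\<dots> \<le> x" using sy n1 by (simp add: divide_le_eq)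
      finally show False using dev e by simp
    qed
    then show "xs \<in> X - T" using l unfolding X_def T_def by auto
  qed
  have "cond_max_dev p k n \<epsilon> = (\<Sum>xs\<in>Dv. list_prob p xs) / A"
    unfolding cond_max_dev_def Dv_def A_def X_def ..
  also have "\<dots> \<le> (\<Sum>xs\<in>X - T. list_prob p xs) / A"
    by (intro divide_right_mono sum_mono2 DvT) (use finX A_pos Q0 in auto)
  also have "(\<Sum>xs\<in>X - T. list_prob p xs) = A - (\<Sum>ys\<in>B. Fnum p k n ys)"
    unfolding sumT A_def by (rule sum_diff[OF finX TX])
  also have "(A - (\<Sum>ys\<in>B. Fnum p k n ys)) / A = 1 - (\<Sum>ys\<in>B. Fnum p k n ys / A)"
    using A_pos by (simp add: sum_divide_distrib[symmetric] diff_divide_distrib)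
  also have "\<dots> \<le> 1 - (1 - 4 * x) * (1 - r)"
  proof -
    have x4: "1 - 4 * x \<ge> 0" using x by simp
    have "(1 - 4 * x) * (1 - r) \<le> (1 - 4 * x) * ((\<Sum>ys\<in>B. list_prob p ys) / P^(k-1))"
      using sumB Z_pos x4 by (intro mult_left_mono) (auto simp: pos_le_divide_eq mult.commute)
    also have "\<dots> = (\<Sum>ys\<in>B. (1 - 4 * x) * (list_prob p ys / P^(k-1)))"
      by (simp add: sum_distrib_left sum_divide_distrib)
    also have "\<dots> \<le> (\<Sum>ys\<in>B. Fnum p k n ys / A)"
      by (rule sum_mono) (rule f_ge)
    finally show ?thesis by simp
  qed
  also have "\<dots> \<le> 4 * x + r" using x r0 by (simp add: algebra_simps)
  finally show ?thesis .
qed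

end

locale hyp =
  fixes w :: "nat \<Rightarrow> real" and \<rho> :: real and L :: "real \<Rightarrow> real" and k :: "nat \<Rightarrow> nat"
  assumes w_nonneg: "\<forall>n. w n \<ge> 0"
    and rho_pos: "\<rho> > 0"
    and L_sv: "slowly_varying L"
    and w_asymp: "w \<sim>[at_top] (\<lambda>n. L (real n) * inverse (real n) * inverse \<rho> ^ n)"
    and W_fin: "summable (\<lambda>n. w n * \<rho> ^ n)"
    and W_pos: "(\<Sum>n. w n * \<rho> ^ n) > 0"
    and k_pos: "\<forall>n\<ge>1. k n \<ge> 1"
    and kL: "((\<lambda>n. real (k n) * L (real n)) \<longlongrightarrow> 0) sequentially"
begin

definition "W = (\<Sum>n. w n * \<rho> ^ n)"
definition "p = step_prob w \<rho>"
definition "ell j = real j * p j"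
definition "Lt t = L t / W"
definition "PP n = (\<Sum>j\<le>n. p j)"
definition "mu n = (\<Sum>j\<le>n. real j * p j)"

lemma W0: "W > 0" using W_pos unfolding W_def .
lemma p_eq: "p j = w j * \<rho>^j / W" unfolding p_def step_prob_def W_def ..
lemma p0: "p j \<ge> 0" unfolding p_eq using w_nonneg rho_pos W0 by simp

lemma PP_lim: "PP \<longlonglongrightarrow> 1"
proof -
  have s: "summable p" unfolding p_eq[abs_def] by (rule summable_divide[OF W_fin])
  have "suminf p = 1" unfolding p_eq[abs_def] suminf_divide[OF W_fin] using W0 by (simp add: W_def)
  then show ?thesis unfolding PP_def[abs_def] using summable_LIMSEQ'[OF s] by simp
qed

lemma PP_half: "\<forall>\<^sub>F n in sequentially. PP n \<ge> 1/2"
  using order_tendstoD(1)[OF PP_lim, of "1/2"] by (auto elim: eventually_mono)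

lemma L_pos_ev: "\<exists>X1. \<forall>t\<ge>X1. L t > 0"
  using L_sv unfolding slowly_varying_def eventually_at_top_linorder by auto

lemma Lt_pos_ev: "\<forall>\<^sub>F n in sequentially. Lt (real n) > 0"
proof -
  obtain X1 where X1: "\<And>t. t \<ge> X1 \<Longrightarrow> L t > 0" using L_pos_ev by auto
  show ?thesis
    by (rule eventually_sequentiallyI[of "nat \<lceil>X1\<rceil>"]) (use X1 W0 in \<open>auto simp: Lt_def intro!: X1 divide_pos_pos\<close>)
qed

lemma ratio_lim: "(\<lambda>n. ell n / Lt (real n)) \<longlonglongrightarrow> 1"
proof -
  define g where "g n = L (real n) * inverse (real n) * inverse \<rho> ^ n" for n
  have ev: "\<forall>\<^sub>F n in sequentially. Lt (real n) > 0 \<and> n \<ge> 1"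
    using Lt_pos_ev eventually_ge_at_top[of 1] by eventually_elim auto
  have "\<forall>\<^sub>F n in sequentially. w n \<noteq> 0 \<or> g n \<noteq> 0"
    using ev by eventually_elim (use rho_pos W0 in \<open>auto simp: g_def Lt_def\<close>)
  then have lim: "(\<lambda>n. w n / g n) \<longlonglongrightarrow> 1"
    using asymp_equivD_strong[OF w_asymp[folded g_def[abs_def]]] by simp
  have "\<forall>\<^sub>F n in sequentially. w n / g n = ell n / Lt (real n)"
    using ev
  proof eventually_elim
    case (elim n)
    then have Ln: "L (real n) > 0" using W0 by (simp add: Lt_def zero_less_divide_iff)
    show ?case using Ln rho_pos W0 elim
      by (simp add: g_def ell_def Lt_def p_eq field_simps power_inverse)
  qed
  then show ?thesis by (rule Lim_transform_eventually[OF lim])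
qed

lemma ratio_ev:
  assumes a: "a > 0"
  shows "\<exists>N. \<forall>n\<ge>N. Lt (real n) > 0 \<and> (1 - a) * Lt (real n) \<le> ell n \<and> ell n \<le> (1 + a) * Lt (real n)"
proof -
  have "\<forall>\<^sub>F n in sequentially. dist (ell n / Lt (real n)) 1 < a" using ratio_lim a by (simp add: tendsto_iff)
  then have "\<forall>\<^sub>F n in sequentially. Lt (real n) > 0 \<and> (1 - a) * Lt (real n) \<le> ell n \<and> ell n \<le> (1 + a) * Lt (real n)"
    using Lt_pos_ev
  proof eventually_elim
    case (elim n)
    then have "1 - a < ell n / Lt (real n)" "ell n / Lt (real n) < 1 + a" by (auto simp: dist_real_def)
    then show ?case using elim(2) by (auto simp: field_simps)
  qed
  then show ?thesis unfolding eventually_sequentially by blast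
qed

end

context hyp begin

lemma E1:
  assumes \<eta>: "0 < \<eta>" "\<eta> \<le> 1"
  shows "\<exists>N. \<forall>n\<ge>N. \<forall>m. real n \<le> 2 * real m \<longrightarrow> m \<le> n \<longrightarrow> (1 - \<eta>) * ell n \<le> ell m \<and> ell m \<le> (1 + \<eta>) * ell n"
proof -
  define a where "a = \<eta> / 5"
  have a: "0 < a" "a \<le> 1/5" using \<eta> unfolding a_def by auto
  obtain X0 where X0: "\<And>x c. x \<ge> X0 \<Longrightarrow> c \<in> {1/2..1} \<Longrightarrow> \<bar>L (c * x) / L x - 1\<bar> \<le> a"
    using UCT[OF L_sv a(1)] by blast
  obtain N1 where N1: "\<And>n. n \<ge> N1 \<Longrightarrow> Lt (real n) > 0 \<and> (1 - a) * Lt (real n) \<le> ell n \<and> ell n \<le> (1 + a) * Lt (real n)"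
    using ratio_ev[OF a(1)] by auto
  have u1: "(1 + a) * (1 + a) \<le> (1 + \<eta>) * (1 - a)"
  proof -
    have h: "\<eta> * \<eta> \<le> \<eta>" using mult_left_mono[of \<eta> 1 \<eta>] \<eta> by simp
    show ?thesis unfolding a_def using h \<eta> by (simp add: field_simps)
  qed
  have l1: "(1 - \<eta>) * (1 + a) \<le> (1 - a) * (1 - a)"
  proof -
    have h: "0 \<le> \<eta> * \<eta>" by simp
    show ?thesis unfolding a_def using h \<eta> by (simp add: field_simps)
  qed
  define N where "N = max (2 * N1) (nat \<lceil>X0\<rceil>) + 1"
  show ?thesis
  proof (intro exI[of _ N] allI impI)
    fix n m assume n: "n \<ge> N" and nm: "real n \<le> 2 * real m" "m \<le> n"
    have nN1: "n \<ge> N1" and mN1: "m \<ge> N1" using n nm unfolding N_def by auto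
    have nX0: "real n \<ge> X0" using n unfolding N_def by linarith
    have n0: "real n > 0" using n unfolding N_def by simp
    have c: "real m / real n \<in> {1/2..1}" using nm n0 by (auto simp: field_simps)
    have cx: "real m / real n * real n = real m" using n0 by simp
    from X0[OF nX0 c] have hL: "\<bar>L (real m) / L (real n) - 1\<bar> \<le> a" unfolding cx .
    from N1[OF nN1] have Ln: "Lt (real n) > 0" "(1 - a) * Lt (real n) \<le> ell n" "ell n \<le> (1 + a) * Lt (real n)" by auto
    from N1[OF mN1] have Lm: "(1 - a) * Lt (real m) \<le> ell m" "ell m \<le> (1 + a) * Lt (real m)" by auto
    have rat: "Lt (real m) / Lt (real n) = L (real m) / L (real n)" unfolding Lt_def using W0 by simp
    have Lmn: "Lt (real m) \<le> (1 + a) * Lt (real n)" "(1 - a) * Lt (real n) \<le> Lt (real m)"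
      using hL Ln(1) unfolding rat[symmetric] by (auto simp: field_simps abs_le_iff)
    have en: "ell n \<ge> 0" unfolding ell_def using p0 by simp
    have a1: "1 - a > 0" "1 + a > 0" using a by auto
    have Ltn_up: "Lt (real n) \<le> ell n / (1 - a)" using Ln(2) a1 by (simp add: pos_le_divide_eq mult.commute)
    have Ltn_lo: "ell n / (1 + a) \<le> Lt (real n)" using Ln(3) a1 by (simp add: pos_divide_le_eq mult.commute)
    have "ell m \<le> (1 + a) * Lt (real m)" by (rule Lm(2))
    also have "\<dots> \<le> (1 + a) * ((1 + a) * Lt (real n))" using Lmn(1) a1 by (intro mult_left_mono) auto
    also have "\<dots> \<le> (1 + a) * ((1 + a) * (ell n / (1 - a)))" using Ltn_up a1 by (intro mult_left_mono) auto
    also have "\<dots> = ((1 + a) * (1 + a) / (1 - a)) * ell n" by simp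
    also have "\<dots> \<le> (1 + \<eta>) * ell n" using u1 a1 en by (intro mult_right_mono) (auto simp: pos_divide_le_eq)
    finally have up: "ell m \<le> (1 + \<eta>) * ell n" .
    have "(1 - \<eta>) * ell n \<le> ((1 - a) * (1 - a) / (1 + a)) * ell n" using l1 a1 en by (intro mult_right_mono) (auto simp: pos_le_divide_eq)
    also have "\<dots> = (1 - a) * ((1 - a) * (ell n / (1 + a)))" by simp
    also have "\<dots> \<le> (1 - a) * ((1 - a) * Lt (real n))" using Ltn_lo a1 by (intro mult_left_mono) auto
    also have "\<dots> \<le> (1 - a) * Lt (real m)" using Lmn(2) a1 by (intro mult_left_mono) auto
    also have "\<dots> \<le> ell m" by (rule Lm(1))
    finally show "(1 - \<eta>) * ell n \<le> ell m \<and> ell m \<le> (1 + \<eta>) * ell n" using up by simp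
  qed
qed

end

context hyp begin

lemma potter_real:
  "\<exists>X. X \<ge> 1 \<and> (\<forall>t\<ge>X. L t > 0) \<and> (\<forall>x y. X \<le> y \<longrightarrow> y \<le> x \<longrightarrow> L y \<le> sqrt 2 * sqrt (x / y) * L x)"
proof -
  have e: "sqrt 2 - 1 > 0" by simp
  obtain X0 where X0: "\<And>x c. x \<ge> X0 \<Longrightarrow> c \<in> {1/2..1} \<Longrightarrow> \<bar>L (c * x) / L x - 1\<bar> \<le> sqrt 2 - 1"
    using UCT[OF L_sv e] by blast
  obtain X1 where X1: "\<And>t. t \<ge> X1 \<Longrightarrow> L t > 0" using L_pos_ev by blast
  define X where "X = max (max X0 X1) 1"
  have XL: "t \<ge> X \<Longrightarrow> L t > 0" for t using X1 unfolding X_def by auto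
  have step: "L y \<le> sqrt 2 * L x" if "X \<le> y" "y \<le> x" "x \<le> 2 * y" for x y
  proof -
    have X1': "X \<ge> 1" "X \<ge> X0" unfolding X_def by auto
    have x0: "x > 0" using that X1' by linarith
    have c: "y / x \<in> {1/2..1}" using that x0 by (simp add: field_simps)
    have "x \<ge> X0" using that X1' by linarith
    from X0[OF this c] have "\<bar>L y / L x - 1\<bar> \<le> sqrt 2 - 1" using x0 by simp
    then have "L y / L x \<le> sqrt 2" by linarith
    moreover have "L x > 0" using that by (intro XL) auto
    ultimately show ?thesis by (simp add: divide_le_eq)
  qed
  have ind: "\<forall>x y. X \<le> y \<longrightarrow> y \<le> x \<longrightarrow> x \<le> 2^j * y \<longrightarrow> L y \<le> sqrt 2 ^ j * L x" for j
  proof (induction j)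
    case 0
    show ?case
    proof (intro allI impI)
      fix x y assume "X \<le> y" "y \<le> x" "x \<le> 2^0 * y"
      then have "x = y" by simp
      then show "L y \<le> sqrt 2 ^ 0 * L x" by simp
    qed
  next
    case (Suc j)
    show ?case
    proof (intro allI impI)
      fix x y assume xy: "X \<le> y" "y \<le> x" "x \<le> 2 ^ Suc j * y"
      have Lx: "L x > 0" using xy by (intro XL) auto
      have s1: "sqrt 2 \<le> sqrt 2 ^ Suc j" using power_increasing[of 1 "Suc j" "sqrt 2"] by simp
      show "L y \<le> sqrt 2 ^ Suc j * L x"
      proof (cases "x \<le> 2 * y")
        case True
        then have "L y \<le> sqrt 2 * L x" by (rule step[OF xy(1) xy(2)])
        also have "\<dots> \<le> sqrt 2 ^ Suc j * L x" using s1 Lx by (intro mult_right_mono) auto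
        finally show ?thesis .
      next
        case False
        have X1': "X \<ge> 1" unfolding X_def by auto
        define z where "z = x / 2"
        have z: "X \<le> y" "y \<le> z" "z \<le> 2^j * y" using xy False unfolding z_def by auto
        have zz: "X \<le> z" "z \<le> x" "x \<le> 2 * z" using z xy X1' unfolding z_def by linarith+
        have "L y \<le> sqrt 2 ^ j * L z" using Suc.IH[rule_format, OF z(1) z(2) z(3)] .
        also have "L z \<le> sqrt 2 * L x" by (rule step[OF zz])
        then have "sqrt 2 ^ j * L z \<le> sqrt 2 ^ j * (sqrt 2 * L x)" by (intro mult_left_mono) auto
        also have "\<dots> = sqrt 2 ^ Suc j * L x" by simp
        finally show ?thesis .
      qed
    qed
  qed
  have main: "L y \<le> sqrt 2 * sqrt (x / y) * L x" if xy: "X \<le> y" "y \<le> x" for x y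
  proof -
    have y0: "y > 0" using xy unfolding X_def by auto
    define t where "t = nat \<lfloor>x / y\<rfloor>"
    have xy1: "x / y \<ge> 1" using xy y0 by simp
    have ft: "real t = real_of_int \<lfloor>x / y\<rfloor>" unfolding t_def using xy1 by simp
    have "real t > x / y - 1" using ft floor_correct[of "x / y"] by linarith
    then have "real t > 0" using xy1 by linarith
    then have t1: "t \<ge> 1" by simp
    obtain j where j: "2^j \<le> t" "t < 2^(j+1)" using ex_power_ivl1[of 2 t] t1 by auto
    have "x / y < real t + 1" using ft floor_correct[of "x / y"] by linarith
    also have "real t + 1 \<le> 2^(j+1)"
    proof -
      have "t + 1 \<le> 2^(j+1)" using j(2) by simp
      then have "real (t + 1) \<le> real (2^(j+1))" by (simp only: of_nat_le_iff)
      then show ?thesis by simp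
    qed
    finally have "x \<le> 2^(j+1) * y" using y0 by (simp add: divide_less_eq)
    then have "L y \<le> sqrt 2 ^ (j+1) * L x" using ind xy by blast
    also have "sqrt 2 ^ (j+1) = sqrt 2 * sqrt (2^j)" by (simp add: real_sqrt_power)
    also have "sqrt (2^j) \<le> sqrt (x / y)"
    proof -
      have "(2::real)^j \<le> real t" using j(1) by (metis of_nat_le_iff of_nat_numeral of_nat_power)
      also have "real t \<le> x / y" using ft floor_correct[of "x / y"] by linarith
      finally show ?thesis by simp
    qed
    then have "sqrt 2 * sqrt (2^j) * L x \<le> sqrt 2 * sqrt (x / y) * L x"
      using XL[of x] xy by (intro mult_right_mono mult_left_mono) auto
    finally show ?thesis .
  qed
  have "X \<ge> 1" unfolding X_def by auto
  then show ?thesis using XL main by blast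
qed

lemma potter_int:
  "\<exists>C M0. C \<ge> 1 \<and> M0 \<ge> 1 \<and> ell M0 > 0 \<and> (\<forall>j\<ge>M0. ell j > 0) \<and>
     (\<forall>n m. M0 \<le> m \<longrightarrow> m \<le> n \<longrightarrow> ell m \<le> C * sqrt (real n / real m) * ell n)"
proof -
  obtain X where X: "X \<ge> 1" "\<And>t. t \<ge> X \<Longrightarrow> L t > 0"
    "\<And>x y. X \<le> y \<Longrightarrow> y \<le> x \<Longrightarrow> L y \<le> sqrt 2 * sqrt (x / y) * L x"
    using potter_real by blast
  obtain N1 where N1: "\<And>n. n \<ge> N1 \<Longrightarrow> Lt (real n) > 0 \<and> (1 - 1/2) * Lt (real n) \<le> ell n \<and> ell n \<le> (1 + 1/2) * Lt (real n)"
    using ratio_ev[of "1/2"] by auto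
  define M0 where "M0 = max N1 (nat \<lceil>X\<rceil>) + 1"
  have "real (max N1 (nat \<lceil>X\<rceil>)) \<ge> real (nat \<lceil>X\<rceil>)" by simp
  moreover have "real (nat \<lceil>X\<rceil>) \<ge> X" by (rule real_nat_ceiling_ge)
  ultimately have M0: "M0 \<ge> 1" "M0 \<ge> N1" "real M0 \<ge> X" unfolding M0_def by auto
  have ellpos: "ell j > 0" if "j \<ge> M0" for j
  proof -
    have a: "Lt (real j) > 0" "(1 - 1/2) * Lt (real j) \<le> ell j" using N1[of j] that M0 by auto
    have "Lt (real j) / 2 \<le> ell j" using a(2) by simp
    then show ?thesis using a(1) by linarith
  qed
  define C where "C = 3 * sqrt 2"
  have "sqrt 2 \<ge> 1" by (rule real_sqrt_ge_one) simp
  then have C1: "C \<ge> 1" unfolding C_def by linarith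
  have main: "ell m \<le> C * sqrt (real n / real m) * ell n" if mn: "M0 \<le> m" "m \<le> n" for n m
  proof -
    have Nm: "Lt (real m) > 0" "ell m \<le> (1 + 1/2) * Lt (real m)" using N1[of m] mn M0 by auto
    have Nn: "Lt (real n) > 0" "(1 - 1/2) * Lt (real n) \<le> ell n" using N1[of n] mn M0 by auto
    have XLm: "X \<le> real m" using M0 mn by linarith
    have "L (real m) \<le> sqrt 2 * sqrt (real n / real m) * L (real n)" by (rule X(3)) (use XLm mn in auto)
    then have "L (real m) / W \<le> sqrt 2 * sqrt (real n / real m) * L (real n) / W"
      using W0 by (intro divide_right_mono) auto
    then have Lt: "Lt (real m) \<le> sqrt 2 * sqrt (real n / real m) * Lt (real n)"
      unfolding Lt_def by simp
    have "ell m \<le> (3/2) * Lt (real m)" using Nm by simp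
    also have "\<dots> \<le> (3/2) * (sqrt 2 * sqrt (real n / real m) * Lt (real n))" using Lt by simp
    also have "\<dots> \<le> (3/2) * (sqrt 2 * sqrt (real n / real m) * (2 * ell n))"
      using Nn by (intro mult_left_mono) auto
    also have "\<dots> = C * sqrt (real n / real m) * ell n" unfolding C_def by simp
    finally show ?thesis .
  qed
  have "C \<ge> 1 \<and> M0 \<ge> 1 \<and> ell M0 > 0 \<and> (\<forall>j\<ge>M0. ell j > 0) \<and>
     (\<forall>n m. M0 \<le> m \<longrightarrow> m \<le> n \<longrightarrow> ell m \<le> C * sqrt (real n / real m) * ell n)"
    using C1 M0(1) ellpos main by blast
  then show ?thesis by blast
qed

end

lemma sum_inv_sqrt: "(\<Sum>j\<in>{1..n}. 1 / sqrt (real j)) \<le> 2 * sqrt (real n)"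
proof (induction n)
  case 0 then show ?case by simp
next
  case (Suc n)
  have a: "sqrt (real n) \<le> sqrt (real (Suc n))" by simp
  have s0: "sqrt (real (Suc n)) > 0" by simp
  have key: "1 / sqrt (real (Suc n)) \<le> 2 * (sqrt (real (Suc n)) - sqrt (real n))"
  proof -
    have "(sqrt (real (Suc n)) - sqrt (real n)) * (sqrt (real (Suc n)) + sqrt (real n)) = 1"
      by (simp add: algebra_simps)
    moreover have "sqrt (real (Suc n)) + sqrt (real n) \<le> 2 * sqrt (real (Suc n))" using a by simp
    moreover have "sqrt (real (Suc n)) - sqrt (real n) \<ge> 0" using a by simp
    ultimately have h: "1 \<le> (sqrt (real (Suc n)) - sqrt (real n)) * (2 * sqrt (real (Suc n)))"
      by (metis mult_left_mono)
    have "1 / sqrt (real (Suc n)) \<le> 2 * (sqrt (real (Suc n)) - sqrt (real n)) \<longleftrightarrow>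
          1 \<le> 2 * (sqrt (real (Suc n)) - sqrt (real n)) * sqrt (real (Suc n))"
      by (rule pos_divide_le_eq[OF s0])
    then show ?thesis using h by (simp only: ac_simps)
  qed
  have "(\<Sum>j\<in>{1..Suc n}. 1 / sqrt (real j)) = (\<Sum>j\<in>{1..n}. 1 / sqrt (real j)) + 1 / sqrt (real (Suc n))"
    by simp
  also have "\<dots> \<le> 2 * sqrt (real n) + 2 * (sqrt (real (Suc n)) - sqrt (real n))" using Suc key by linarith
  finally show ?case by simp
qed

context hyp begin

lemma ell0: "ell j \<ge> 0" unfolding ell_def using p0 by simp

lemma nell_ev: "\<forall>\<^sub>F n in sequentially. real n * ell n \<ge> B"
proof -
  obtain C M0 where C: "C \<ge> 1" "M0 \<ge> 1" "ell M0 > 0"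
    and pot: "\<And>n m. M0 \<le> m \<Longrightarrow> m \<le> n \<Longrightarrow> ell m \<le> C * sqrt (real n / real m) * ell n"
    using potter_int by blast
  define c where "c = ell M0 * sqrt (real M0) / C"
  have c0: "c > 0" unfolding c_def using C by simp
  have lb: "real n * ell n \<ge> c * sqrt (real n)" if n: "n \<ge> M0" for n
  proof -
    have n0: "real n > 0" using n C by simp
    have "ell M0 \<le> C * (sqrt (real n) / sqrt (real M0)) * ell n" using pot[OF order_refl n] by (simp add: real_sqrt_divide)
    then have "ell M0 * sqrt (real M0) \<le> C * sqrt (real n) * ell n" using C by (simp add: field_simps)
    then have "c \<le> sqrt (real n) * ell n" unfolding c_def using C by (simp add: divide_le_eq mult.commute mult.left_commute)
    then have "c * sqrt (real n) \<le> sqrt (real n) * ell n * sqrt (real n)" by (intro mult_right_mono) auto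
    also have "\<dots> = real n * ell n" using n0 by (simp add: algebra_simps)
    finally show ?thesis .
  qed
  have "\<forall>\<^sub>F n in sequentially. n \<ge> max M0 (nat \<lceil>(B / c)^2\<rceil>)" by (rule eventually_ge_at_top)
  then show ?thesis
  proof eventually_elim
    case (elim n)
    then have n: "n \<ge> M0" "real n \<ge> (B / c)^2" by (auto simp: nat_le_iff ceiling_le_iff)
    show ?case
    proof (cases "B \<le> 0")
      case True then show ?thesis using ell0[of n] by (simp add: order_trans[OF True])
    next
      case False
      have "B / c \<le> sqrt (real n)" using n(2) real_le_rsqrt by (metis abs_le_D1 real_sqrt_abs real_sqrt_le_iff)
      then have "B \<le> c * sqrt (real n)" using c0 by (simp add: divide_le_eq mult.commute)
      then show ?thesis using lb[OF n(1)] by linarith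
    qed
  qed
qed

end

lemma sqrt_le_self': "t \<ge> 1 \<Longrightarrow> sqrt t \<le> (t::real)"
proof -
  assume t: "t \<ge> 1"
  have "t \<le> t * t" using t by (simp add: mult_le_cancel_left1)
  then have "sqrt t \<le> sqrt (t * t)" by (rule real_sqrt_le_mono)
  also have "\<dots> = t" using t by simp
  finally show ?thesis .
qed

context hyp begin

lemma ell_eq: "ell n = real n * p n" unfolding ell_def ..

lemma h2_ev: "\<exists>C. C \<ge> 0 \<and> (\<forall>\<^sub>F n in sequentially. \<forall>m. 1 \<le> m \<longrightarrow> m \<le> n \<longrightarrow> p m \<le> C * (real n / real m)^2 * p n)"
proof -
  obtain C M0 where C: "C \<ge> 1" "M0 \<ge> 1" "ell M0 > 0"
    and pot: "\<And>n m. M0 \<le> m \<Longrightarrow> m \<le> n \<Longrightarrow> ell m \<le> C * sqrt (real n / real m) * ell n"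
    using potter_int by blast
  define Bm where "Bm = Max (p ` {..M0})"
  have Bm: "m \<le> M0 \<Longrightarrow> p m \<le> Bm" for m unfolding Bm_def by (rule Max_ge) auto
  have ev: "\<forall>\<^sub>F n in sequentially. real n * ell n \<ge> Bm * (real M0)^2 \<and> n \<ge> M0"
    using nell_ev[of "Bm * (real M0)^2"] eventually_ge_at_top[of M0] by eventually_elim auto
  have "\<forall>\<^sub>F n in sequentially. \<forall>m. 1 \<le> m \<longrightarrow> m \<le> n \<longrightarrow> p m \<le> C * (real n / real m)^2 * p n"
    using ev
  proof eventually_elim
    case (elim n)
    show ?case
    proof (intro allI impI)
      fix m assume m: "1 \<le> m" "m \<le> n"
      have m0: "real m > 0" using m by simp
      have n0: "real n > 0" using m by simp
      have pn0: "p n \<ge> 0" by (rule p0)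
      have nm1: "real n / real m \<ge> 1" using m m0 by simp
      show "p m \<le> C * (real n / real m)^2 * p n"
      proof (cases "M0 \<le> m")
        case True
        have "real m * p m = ell m" by (simp add: ell_eq)
        also have "\<dots> \<le> C * sqrt (real n / real m) * ell n" by (rule pot[OF True m(2)])
        also have "\<dots> \<le> C * (real n / real m) * ell n"
          using sqrt_le_self'[OF nm1] C ell0[of n] by (intro mult_right_mono mult_left_mono) auto
        also have "\<dots> = real m * (C * (real n / real m)^2 * p n)"
          using m0 by (simp add: ell_eq power2_eq_square field_simps)
        finally show ?thesis using m0 by simp
      next
        case False
        have "p m \<le> Bm" using False by (intro Bm) auto
        also have "Bm \<le> real n * ell n / (real M0)^2" using elim C by (simp add: pos_le_divide_eq)
        also have "\<dots> = (real n / real M0)^2 * p n" by (simp add: ell_eq power2_eq_square)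
        also have "\<dots> \<le> (real n / real m)^2 * p n"
        proof (intro mult_right_mono power_mono)
          show "real n / real M0 \<le> real n / real m" using False m0 n0 by (intro divide_left_mono) auto
        qed (use pn0 n0 C in auto)
        also have "\<dots> \<le> C * (real n / real m)^2 * p n"
          using C pn0 by (intro mult_right_mono) (auto intro: mult_le_cancel_right1[THEN iffD2])
        finally show ?thesis .
      qed
    qed
  qed
  then show ?thesis using C by (intro exI[of _ C]) auto
qed

lemma kell_lim: "(\<lambda>n. real (k n) * ell n) \<longlonglongrightarrow> 0"
proof (rule real_tendsto_sandwich)
  show "(\<lambda>n. 0) \<longlonglongrightarrow> (0::real)" by simp
  have "(\<lambda>n. (3/2) / W * (real (k n) * L (real n))) \<longlonglongrightarrow> (3/2) / W * 0"
    by (intro tendsto_mult tendsto_const kL)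
  then show "(\<lambda>n. (3/2) / W * (real (k n) * L (real n))) \<longlonglongrightarrow> 0" by simp
  show "\<forall>\<^sub>F n in sequentially. 0 \<le> real (k n) * ell n" using ell0 by simp
  obtain N1 where N1: "\<And>n. n \<ge> N1 \<Longrightarrow> Lt (real n) > 0 \<and> (1 - 1/2) * Lt (real n) \<le> ell n \<and> ell n \<le> (1 + 1/2) * Lt (real n)"
    using ratio_ev[of "1/2"] by auto
  show "\<forall>\<^sub>F n in sequentially. real (k n) * ell n \<le> (3/2) / W * (real (k n) * L (real n))"
  proof (rule eventually_sequentiallyI[of N1])
    fix n assume n: "n \<ge> N1"
    have "ell n \<le> (3/2) * Lt (real n)" using N1[OF n] by simp
    then have "real (k n) * ell n \<le> real (k n) * ((3/2) * Lt (real n))" by (intro mult_left_mono) auto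
    then show "real (k n) * ell n \<le> (3/2) / W * (real (k n) * L (real n))" by (simp add: Lt_def)
  qed
qed

end

context hyp begin

lemma mu_eq: "mu n = (\<Sum>j\<le>n. ell j)" unfolding mu_def ell_def ..

lemma kmu_lim: "(\<lambda>n. real (k n) * mu n / real n) \<longlonglongrightarrow> 0"
proof -
  obtain C M0 where C: "C \<ge> 1" "M0 \<ge> 1" "ell M0 > 0"
    and pot: "\<And>n m. M0 \<le> m \<Longrightarrow> m \<le> n \<Longrightarrow> ell m \<le> C * sqrt (real n / real m) * ell n"
    using potter_int by blast
  define D where "D = (\<Sum>j<M0. ell j)"
  have D0: "D \<ge> 0" unfolding D_def using ell0 by (simp add: sum_nonneg)
  have mub: "mu n \<le> D + 2 * C * (real n * ell n)" if n: "n \<ge> M0" for n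
  proof -
    have split: "{..n} = {..<M0} \<union> {M0..n}" using n by auto
    have "mu n = D + (\<Sum>j\<in>{M0..n}. ell j)" unfolding mu_eq D_def split
      by (rule sum.union_disjoint) auto
    also have "(\<Sum>j\<in>{M0..n}. ell j) \<le> (\<Sum>j\<in>{M0..n}. C * ell n * sqrt (real n) * (1 / sqrt (real j)))"
    proof (rule sum_mono)
      fix j assume j: "j \<in> {M0..n}"
      have "ell j \<le> C * sqrt (real n / real j) * ell n" using j by (intro pot) auto
      also have "\<dots> = C * ell n * sqrt (real n) * (1 / sqrt (real j))" by (simp add: real_sqrt_divide)
      finally show "ell j \<le> C * ell n * sqrt (real n) * (1 / sqrt (real j))" .
    qed
    also have "\<dots> = C * ell n * sqrt (real n) * (\<Sum>j\<in>{M0..n}. 1 / sqrt (real j))" by (simp add: sum_distrib_left)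
    also have "\<dots> \<le> C * ell n * sqrt (real n) * (\<Sum>j\<in>{1..n}. 1 / sqrt (real j))"
      using C ell0[of n] by (intro mult_left_mono sum_mono2) auto
    also have "\<dots> \<le> C * ell n * sqrt (real n) * (2 * sqrt (real n))"
      using C ell0[of n] by (intro mult_left_mono sum_inv_sqrt) auto
    also have "\<dots> = 2 * C * (real n * ell n)" by (simp add: algebra_simps)
    finally show ?thesis by simp
  qed
  show ?thesis
  proof (rule real_tendsto_sandwich)
    show "(\<lambda>n. 0) \<longlonglongrightarrow> (0::real)" by simp
    show "\<forall>\<^sub>F n in sequentially. 0 \<le> real (k n) * mu n / real n"
    proof (rule always_eventually, rule allI)
      fix n
      have "mu n \<ge> 0" unfolding mu_eq using ell0 by (simp add: sum_nonneg)
      then show "0 \<le> real (k n) * mu n / real n" by simp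
    qed
    have "(\<lambda>n. (D + 2 * C) * (real (k n) * ell n)) \<longlonglongrightarrow> (D + 2 * C) * 0"
      by (intro tendsto_mult tendsto_const kell_lim)
    then show "(\<lambda>n. (D + 2 * C) * (real (k n) * ell n)) \<longlonglongrightarrow> 0" by simp
    have ev: "\<forall>\<^sub>F n in sequentially. real n * ell n \<ge> 1 \<and> n \<ge> M0"
      using nell_ev[of 1] eventually_ge_at_top[of M0] by eventually_elim auto
    show "\<forall>\<^sub>F n in sequentially. real (k n) * mu n / real n \<le> (D + 2 * C) * (real (k n) * ell n)"
      using ev
    proof eventually_elim
      case (elim n)
      have n0: "real n > 0" using elim C by simp
      have k0: "real (k n) \<ge> 0" by simp
      have "real (k n) * mu n / real n \<le> real (k n) * (D + 2 * C * (real n * ell n)) / real n"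
        using mub[of n] elim k0 n0 by (intro divide_right_mono mult_left_mono) auto
      also have "\<dots> = real (k n) * D / real n + 2 * C * (real (k n) * ell n)"
        using n0 by (simp add: field_simps)
      also have "real (k n) * D / real n \<le> D * (real (k n) * ell n)"
      proof -
        have kD0: "real (k n) * D \<ge> 0" using D0 by simp
        have "real (k n) * D * 1 \<le> real (k n) * D * (real n * ell n)"
          by (rule mult_left_mono) (use elim kD0 in auto)
        then have "real (k n) * D \<le> real (k n) * D * (real n * ell n)" by simp
        then show ?thesis using n0 by (simp add: divide_le_eq algebra_simps)
      qed
      finally show ?case by (simp add: algebra_simps)
    qed
  qed
qed

end

context hyp begin

lemma h1_of:
  assumes x: "0 < x" "x \<le> 1/4" and n1: "n \<ge> 1"
    and E: "\<And>m. real n \<le> 2 * real m \<Longrightarrow> m \<le> n \<Longrightarrow> (1 - x) * ell n \<le> ell m \<and> ell m \<le> (1 + x) * ell n"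
    and m: "(1 - x) * real n \<le> real m" "m \<le> n"
  shows "(1 - x) * p n \<le> p m \<and> p m \<le> (1 + x) / (1 - x) * p n"
proof -
  have n0: "real n > 0" using n1 by simp
  have "(3/4) * real n \<le> (1 - x) * real n" using x n0 by (intro mult_right_mono) auto
  then have half: "real n \<le> 2 * real m" using m(1) n0 by linarith
  have m0: "real m > 0" using half n0 by simp
  from E[OF half m(2)] have lo: "(1 - x) * ell n \<le> ell m" and up: "ell m \<le> (1 + x) * ell n" by auto
  have pm: "p m = ell m / real m" using m0 by (simp add: ell_eq)
  have pn: "p n = ell n / real n" using n0 by (simp add: ell_eq)
  have en: "ell n \<ge> 0" by (rule ell0)
  have x1: "1 - x > 0" using x by simp
  have "(1 - x) * p n = (1 - x) * ell n / real n" unfolding pn by simp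
  also have "\<dots> \<le> (1 - x) * ell n / real m"
    using m(2) m0 en x1 by (intro divide_left_mono) auto
  also have "\<dots> \<le> p m" unfolding pm using lo m0 by (intro divide_right_mono) auto
  finally have A: "(1 - x) * p n \<le> p m" .
  have "p m \<le> (1 + x) * ell n / real m" unfolding pm using up m0 by (intro divide_right_mono) auto
  also have "\<dots> \<le> (1 + x) * ell n / ((1 - x) * real n)"
    using m(1) x1 n0 en x m0 by (intro divide_left_mono) (auto intro!: mult_pos_pos)
  also have "\<dots> = (1 + x) / (1 - x) * p n" unfolding pn using x1 n0 by simp
  finally show ?thesis using A by simp
qed

lemma main_bound:
  assumes x: "0 < x" "x \<le> 1/4"
  shows "\<forall>\<^sub>F n in sequentially. tv_dist (cond_tau_law p (k n) n) (trunc_law p (k n) n) \<le> 5 * x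
            \<and> (\<forall>\<epsilon>. \<epsilon> \<ge> x \<longrightarrow> cond_max_dev p (k n) n \<epsilon> \<le> 5 * x)"
proof -
  obtain N where N: "\<And>n m. n \<ge> N \<Longrightarrow> real n \<le> 2 * real m \<Longrightarrow> m \<le> n \<Longrightarrow> (1 - x) * ell n \<le> ell m \<and> ell m \<le> (1 + x) * ell n"
    using E1[of x] x by auto
  obtain C where C0: "C \<ge> 0" and h2: "\<forall>\<^sub>F n in sequentially. \<forall>m. 1 \<le> m \<longrightarrow> m \<le> n \<longrightarrow> p m \<le> C * (real n / real m)^2 * p n"
    using h2_ev by blast
  define \<theta> where "\<theta> n = 2 * real (k n - 1) * mu n / (x * real n * PP n)" for n
  define r where "r n = \<theta> n powr (x / 2)" for n
  have mu0: "mu n \<ge> 0" for n unfolding mu_eq using ell0 by (simp add: sum_nonneg)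
  have PP0: "PP n \<ge> 0" for n unfolding PP_def using p0 by (simp add: sum_nonneg)
  have th0: "\<theta> n \<ge> 0" for n unfolding \<theta>_def using mu0 PP0 x by simp
  have th_lim: "\<theta> \<longlonglongrightarrow> 0"
  proof (rule real_tendsto_sandwich)
    show "(\<lambda>n. 0) \<longlonglongrightarrow> (0::real)" by simp
    show "\<forall>\<^sub>F n in sequentially. 0 \<le> \<theta> n" using th0 by simp
    have "(\<lambda>n. (4 / x) * (real (k n) * mu n / real n)) \<longlonglongrightarrow> (4 / x) * 0"
      by (intro tendsto_mult tendsto_const kmu_lim)
    then show "(\<lambda>n. (4 / x) * (real (k n) * mu n / real n)) \<longlonglongrightarrow> 0" by simp
    have ev: "\<forall>\<^sub>F n in sequentially. PP n \<ge> 1/2 \<and> n \<ge> 1"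
      using PP_half eventually_ge_at_top[of 1] by eventually_elim auto
    show "\<forall>\<^sub>F n in sequentially. \<theta> n \<le> (4 / x) * (real (k n) * mu n / real n)"
      using ev
    proof eventually_elim
      case (elim n)
      have n0: "real n > 0" using elim by simp
      have P0: "PP n > 0" using elim by simp
      have "\<theta> n \<le> 2 * real (k n) * mu n / (x * real n * PP n)"
        unfolding \<theta>_def using mu0[of n] x n0 P0 by (intro divide_right_mono mult_right_mono) auto
      also have "\<dots> \<le> 2 * real (k n) * mu n / (x * real n * (1/2))"
        using mu0[of n] x n0 P0 elim by (intro divide_left_mono mult_left_mono mult_pos_pos) auto
      also have "\<dots> = (4 / x) * (real (k n) * mu n / real n)" using x n0 by (simp add: field_simps)
      finally show ?case .
    qed
  qed
  have r_lim: "r \<longlonglongrightarrow> 0" unfolding r_def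
    by (rule tendsto_zero_powrI[OF th_lim tendsto_const]) (use th0 x in auto)
  have ev_th: "\<forall>\<^sub>F n in sequentially. \<theta> n \<le> 1" using order_tendstoD(2)[OF th_lim, of 1] by (auto elim: eventually_mono)
  have ev_r1: "\<forall>\<^sub>F n in sequentially. r n < 1/8" using order_tendstoD(2)[OF r_lim, of "1/8"] by simp
  have ev_r2: "\<forall>\<^sub>F n in sequentially. r n < x / (8 * C + 1)" using order_tendstoD(2)[OF r_lim, of "x / (8 * C + 1)"] x C0 by simp
  have ev_pn: "\<forall>\<^sub>F n in sequentially. real n * ell n \<ge> 1" by (rule nell_ev)
  have ev_N: "\<forall>\<^sub>F n in sequentially. n \<ge> max N 1" by (rule eventually_ge_at_top)
  show ?thesis
    using ev_th ev_r1 ev_r2 ev_pn ev_N h2 eventually_all_ge_at_top[OF eventually_True]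
  proof eventually_elim
    case (elim n)
    have n1: "n \<ge> 1" and nN: "n \<ge> N" using elim by auto
    have pn: "p n > 0"
    proof -
      have "real n * (real n * p n) \<ge> 1" using elim(4) by (simp add: ell_eq)
      have "real n * p n > 0"
      proof (rule ccontr)
        assume "\<not> real n * p n > 0"
        then have "real n * p n \<le> 0" by simp
        then have "real n * (real n * p n) \<le> 0" by (rule mult_nonneg_nonpos[rotated]) simp
        then show False using \<open>real n * (real n * p n) \<ge> 1\<close> by simp
      qed
      then show ?thesis using n1 by (simp add: zero_less_mult_iff)
    qed
    have r0: "r n \<ge> 0" unfolding r_def by simp
    have Cr: "8 * C * r n \<le> x"
    proof -
      have "(8 * C + 1) * r n \<le> x" using elim(3) C0 by (simp add: less_divide_eq mult.commute less_imp_le)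
      moreover have "8 * C * r n \<le> (8 * C + 1) * r n" using r0 by (simp add: algebra_simps)
      ultimately show ?thesis by linarith
    qed
    interpret F: fin p n "k n" x C "PP n" "mu n" "\<theta> n" "r n"
    proof
      show "\<And>j. p j \<ge> 0" by (rule p0)
      show "n \<ge> 1" by (rule n1)
      show "k n \<ge> 1" using k_pos n1 by auto
      show "p n > 0" by (rule pn)
      show "0 < x" "x \<le> 1/4" using x by auto
      show "C \<ge> 0" by (rule C0)
      show "\<And>m. (1 - x) * real n \<le> real m \<Longrightarrow> m \<le> n \<Longrightarrow> (1 - x) * p n \<le> p m \<and> p m \<le> (1 + x) / (1 - x) * p n"
        by (rule h1_of[OF x n1 N[OF nN]])
      show "\<And>m. 1 \<le> m \<Longrightarrow> m \<le> n \<Longrightarrow> p m \<le> C * (real n / real m)^2 * p n" using elim(6) by auto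
      show "PP n = (\<Sum>j\<le>n. p j)" unfolding PP_def ..
      show "mu n = (\<Sum>j\<le>n. real j * p j)" unfolding mu_def ..
      show "\<theta> n = 2 * real (k n - 1) * mu n / (x * real n * PP n)" unfolding \<theta>_def ..
      show "r n = \<theta> n powr (x / 2)" unfolding r_def ..
      show "\<theta> n \<le> 1" using elim(1) .
      show "r n \<le> 1/8" using elim(2) by simp
      show "8 * C * r n \<le> x" by (rule Cr)
    qed
    have rx: "r n \<le> x"
    proof -
      have "r n * 1 \<le> r n * (8 * C + 1)" using r0 C0 by (intro mult_left_mono) auto
      also have "\<dots> \<le> x" using elim(3) C0 by (simp add: less_divide_eq less_imp_le)
      finally show ?thesis by simp
    qed
    show ?case using F.tv_bound F.cmd_bound rx by force
  qed
qed

end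

lemma tendsto0_crit:
  fixes f :: "nat \<Rightarrow> real"
  assumes "\<And>n. f n \<ge> 0" and "\<And>e. e > 0 \<Longrightarrow> \<forall>\<^sub>F n in sequentially. f n \<le> e"
  shows "f \<longlonglongrightarrow> 0"
proof (rule tendstoI)
  fix e :: real assume e: "e > 0"
  have "\<forall>\<^sub>F n in sequentially. f n \<le> e / 2" using assms(2)[of "e/2"] e by simp
  then show "\<forall>\<^sub>F n in sequentially. dist (f n) 0 < e"
    by eventually_elim (use assms(1) e in \<open>auto simp: dist_real_def\<close>)
qed

theorem theorem2p3:
  fixes w :: "nat \<Rightarrow> real" and \<rho> :: real and L :: "real \<Rightarrow> real" and k :: "nat \<Rightarrow> nat"
  assumes w_nonneg: "\<forall>n. w n \<ge> 0"
    and rho_pos: "\<rho> > 0"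
    and L_sv: "slowly_varying L"
    and w_asymp: "w \<sim>[at_top] (\<lambda>n. L (real n) * inverse (real n) * inverse \<rho> ^ n)"
    and W_fin: "summable (\<lambda>n. w n * \<rho> ^ n)"
    and W_pos: "(\<Sum>n. w n * \<rho> ^ n) > 0"
    and k_pos: "\<forall>n\<ge>1. k n \<ge> 1"
    and kL: "((\<lambda>n. real (k n) * L (real n)) \<longlongrightarrow> 0) sequentially"
  shows "((\<lambda>n. tv_dist (cond_tau_law (step_prob w \<rho>) (k n) n)
                        (trunc_law (step_prob w \<rho>) (k n) n)) \<longlongrightarrow> 0) sequentially
         \<and> (\<forall>\<epsilon>>0. ((\<lambda>n. cond_max_dev (step_prob w \<rho>) (k n) n \<epsilon>) \<longlongrightarrow> 0) sequentially)"
proof -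
  interpret H: hyp w \<rho> L k
    by (rule hyp.intro[OF w_nonneg rho_pos L_sv w_asymp W_fin W_pos k_pos kL])
  have pdef: "step_prob w \<rho> = H.p" by (simp add: H.p_def)
  have tv0: "tv_dist (cond_tau_law H.p (k n) n) (trunc_law H.p (k n) n) \<ge> 0" for n
    unfolding tv_dist_def by (simp add: infsum_nonneg)
  have cm0: "cond_max_dev H.p (k n) n e \<ge> 0" for n e
    unfolding cond_max_dev_def
    by (intro divide_nonneg_nonneg sum_nonneg list_prob_nonneg H.p0)
  have part1: "(\<lambda>n. tv_dist (cond_tau_law H.p (k n) n) (trunc_law H.p (k n) n)) \<longlonglongrightarrow> 0"
  proof (rule tendsto0_crit[OF tv0])
    fix e :: real assume e: "e > 0"
    define x where "x = min (e / 5) (1/4)"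
    have x: "0 < x" "x \<le> 1/4" "5 * x \<le> e" using e unfolding x_def by auto
    show "\<forall>\<^sub>F n in sequentially. tv_dist (cond_tau_law H.p (k n) n) (trunc_law H.p (k n) n) \<le> e"
      using H.main_bound[OF x(1,2)] by eventually_elim (use x in auto)
  qed
  have part2: "(\<lambda>n. cond_max_dev H.p (k n) n \<epsilon>) \<longlonglongrightarrow> 0" if eps: "\<epsilon> > 0" for \<epsilon>
  proof (rule tendsto0_crit[OF cm0])
    fix e :: real assume e: "e > 0"
    define x where "x = min (min (e / 5) (1/4)) \<epsilon>"
    have x: "0 < x" "x \<le> 1/4" "5 * x \<le> e" "\<epsilon> \<ge> x" using e eps unfolding x_def by auto
    show "\<forall>\<^sub>F n in sequentially. cond_max_dev H.p (k n) n \<epsilon> \<le> e"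
      using H.main_bound[OF x(1,2)] by eventually_elim (use x in auto)
  qed
  show ?thesis unfolding pdef using part1 part2 by auto
qed

end
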